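(* Let $L>0$, $\nu\in\mathbb{R}$, with periodic or Neumann boundary conditions on $[0,L]$, and let $W_A^N(t)=\int_0^te^{A(t-s)}\,dW_N(s)$. There exists a constant $C$ independent of $N$ such that $$\mathbb{E}\,\|\partial_xW_A^N(t)\|_{L^\infty}^4\le C\,t^{1/8}\quad\text{for all }t\le1.$$
   Context: $L^2_0=\{f\in L^2([0,L]):\int_0^Lf\,dx=0\}$. $A=-\partial_x^4+\nu\partial_x^2$ is the self-adjoint operator on $L^2_0$ with domain the mean-zero $H^4([0,L])$ functions satisfying the boundary conditions; $\{e_k\}_{k\ge1}$ is an orthonormal basis of $L^2_0$ of eigenvectors of $A$ (Fourier modes). $W_N(t)=\sum_{k=1}^N\alpha_ke_kw_k(t)$ where the $w_k$ are independent standard Brownian motions and the $\alpha_k$ are positive numbers bounded by a constant independent of $k$. *)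

theory Defs
  imports "HOL-Probability.Probability"
begin

datatype boundary_cond = Periodic | Neumann

text \<open>Frequency of the k-th Fourier mode (k \<ge> 1) of the mean-zero basis on [0,L].
  Periodic: e_(2j-1) = sqrt(2/L) cos(2 pi j x/L), e_(2j) = sqrt(2/L) sin(2 pi j x/L).\<close>
definition fourier_freq :: "real \<Rightarrow> boundary_cond \<Rightarrow> nat \<Rightarrow> real" where
  "fourier_freq L bc k = (case bc of
      Periodic \<Rightarrow> 2 * pi * real ((k + 1) div 2) / L
    | Neumann \<Rightarrow> pi * real k / L)"

definition fourier_mode :: "real \<Rightarrow> boundary_cond \<Rightarrow> nat \<Rightarrow> real \<Rightarrow> real" where
  "fourier_mode L bc k x = (case bc of
      Periodic \<Rightarrow> (if odd k then sqrt (2 / L) * cos (fourier_freq L bc k * x)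
                   else sqrt (2 / L) * sin (fourier_freq L bc k * x))
    | Neumann \<Rightarrow> sqrt (2 / L) * cos (fourier_freq L bc k * x))"

text \<open>Eigenvalue of A = -d^4/dx^4 + nu d^2/dx^2 on the k-th mode.\<close>
definition A_eigenvalue :: "real \<Rightarrow> real \<Rightarrow> boundary_cond \<Rightarrow> nat \<Rightarrow> real" where
  "A_eigenvalue L \<nu> bc k = - (fourier_freq L bc k ^ 4) - \<nu> * (fourier_freq L bc k ^ 2)"

definition std_bm :: "'a measure \<Rightarrow> (real \<Rightarrow> 'a \<Rightarrow> real) \<Rightarrow> bool" where
  "std_bm M B \<longleftrightarrow>
     (\<forall>t. B t \<in> borel_measurable M) \<and>
     (\<forall>\<omega>\<in>space M. B 0 \<omega> = 0 \<and> continuous_on {0..} (\<lambda>t. B t \<omega>)) \<and>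
     (\<forall>s t. 0 \<le> s \<and> s < t \<longrightarrow>
        distributed M lborel (\<lambda>\<omega>. B t \<omega> - B s \<omega>) (normal_density 0 (sqrt (t - s)))) \<and>
     (\<forall>ts :: nat \<Rightarrow> real. strict_mono ts \<and> 0 \<le> ts 0 \<longrightarrow>
        prob_space.indep_vars M (\<lambda>_. borel) (\<lambda>i \<omega>. B (ts (Suc i)) \<omega> - B (ts i) \<omega>) UNIV)"

text \<open>Wiener integral of a deterministic integrand f over [0,t] against a path of w,
  as the limit of left-point Riemann(-Stieltjes) sums on uniform partitions (this limit
  exists pathwise for C^1 integrands and continuous paths, and coincides with the Ito integral).\<close>
definition wiener_int :: "(real \<Rightarrow> real) \<Rightarrow> (real \<Rightarrow> 'a \<Rightarrow> real) \<Rightarrow> real \<Rightarrow> 'a \<Rightarrow> real" where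
  "wiener_int f w t \<omega> =
     lim (\<lambda>n. \<Sum>i<n. f (t * real i / real n) *
                      (w (t * real (Suc i) / real n) \<omega> - w (t * real i / real n) \<omega>))"

text \<open>W_A^N(t)(x) = \<integral>_0^t e^{A(t-s)} dW_N(s) evaluated at x, with
  W_N = \<Sum>_{k=1}^N \<alpha>_k e_k w_k.\<close>
definition stoch_conv ::
  "real \<Rightarrow> real \<Rightarrow> boundary_cond \<Rightarrow> (nat \<Rightarrow> real) \<Rightarrow> (nat \<Rightarrow> real \<Rightarrow> 'a \<Rightarrow> real)
     \<Rightarrow> nat \<Rightarrow> real \<Rightarrow> real \<Rightarrow> 'a \<Rightarrow> real" where
  "stoch_conv L \<nu> bc \<alpha> w N t x \<omega> =
     (\<Sum>k=1..N. \<alpha> k * fourier_mode L bc k x *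
        wiener_int (\<lambda>s. exp (A_eigenvalue L \<nu> bc k * (t - s))) (w k) t \<omega>)"

end

theory Submission
  imports Defs
begin

lemma rs_convergent:
  fixes w :: "real \<Rightarrow> real" and \<mu> t :: real
  assumes t: "t > 0" and cw: "continuous_on {0..t} w" and w0: "w 0 = 0"
  shows "convergent (\<lambda>n. \<Sum>i<n. exp (\<mu> * (t - t*real i/real n)) *
             (w (t*real (Suc i)/real n) - w (t*real i/real n)))"
proof -
  define g where "g s = exp (\<mu> * (t - s))" for s
  define g' where "g' s = - \<mu> * exp (\<mu> * (t - s))" for s
  have dg: "(g has_field_derivative g' s) (at s within S)" for s S
    unfolding g_def g'_def by (auto intro!: derivative_eq_intros)
  define \<phi> where "\<phi> u = g' u * w u" for u
  have cphi: "continuous_on {0..t} \<phi>"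
    unfolding \<phi>_def g'_def by (intro continuous_intros cw)
  define \<Phi> where "\<Phi> s = integral {0..s} \<phi>" for s
  have dPhi: "(\<Phi> has_field_derivative \<phi> s) (at s within {0..t})" if "s \<in> {0..t}" for s
    unfolding \<Phi>_def using integral_has_real_derivative[OF cphi that] .
  define \<Psi> where "\<Psi> s = g s * w s - \<Phi> s" for s
  define G where "G = \<bar>\<mu>\<bar> * exp (\<bar>\<mu>\<bar> * t)"
  have Gb: "\<bar>g' s\<bar> \<le> G" if "s \<in> {0..t}" for s
  proof -
    have "\<mu> * (t - s) \<le> \<bar>\<mu>\<bar> * t" using that
      by (smt (verit, ccfv_SIG) atLeastAtMost_iff mult_left_mono abs_ge_self abs_mult abs_of_nonneg mult_right_mono)
    then show ?thesis unfolding g'_def G_def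
      by (auto simp: abs_mult intro!: mult_left_mono)
  qed
  have G0: "G \<ge> 0" unfolding G_def by simp
  let ?S = "\<lambda>n. \<Sum>i<n. exp (\<mu> * (t - t*real i/real n)) *
             (w (t*real (Suc i)/real n) - w (t*real i/real n))"
  have ucw: "uniformly_continuous_on {0..t} w"
    using compact_uniformly_continuous[OF cw] by simp
  have "?S \<longlonglongrightarrow> \<Psi> t - \<Psi> 0"
  proof (rule LIMSEQ_I)
    fix r :: real assume r: "r > 0"
    define \<epsilon> where "\<epsilon> = r / (2 * (G + 1) * t)"
    have eps: "\<epsilon> > 0" unfolding \<epsilon>_def using r t G0 by auto
    obtain d where d: "d > 0" and dd: "\<And>x y. x \<in> {0..t} \<Longrightarrow> y \<in> {0..t} \<Longrightarrow> dist y x < d \<Longrightarrow> dist (w y) (w x) < \<epsilon>"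
      using ucw eps unfolding uniformly_continuous_on_def by metis
    obtain n0 :: nat where n0: "n0 > t / d" using reals_Archimedean2 by blast
    show "\<exists>no. \<forall>n\<ge>no. norm (?S n - (\<Psi> t - \<Psi> 0)) < r"
    proof (intro exI allI impI)
      fix n assume nn: "n \<ge> Suc n0"
      then have npos: "n > 0" by simp
      define tt where "tt i = t * real i / real n" for i
      have tt0: "tt 0 = 0" and ttn: "tt n = t" using npos by (auto simp: tt_def)
      have ttin: "tt i \<in> {0..t}" if "i \<le> n" for i
        using that t npos by (auto simp: tt_def field_simps)
      have ttstep: "tt (Suc i) - tt i = t / real n" for i
        by (simp add: tt_def add_divide_distrib distrib_left)
      have tnpos: "t / real n > 0" using t npos by simp
      have small: "t / real n < d"
      proof -
        have "t / d < real n" using n0 nn by linarith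
        then show ?thesis using d npos by (simp add: field_simps)
      qed
      have tele: "\<Psi> t - \<Psi> 0 = (\<Sum>i<n. \<Psi> (tt (Suc i)) - \<Psi> (tt i))"
        using sum_lessThan_telescope[of "\<lambda>i. \<Psi> (tt i)" n] tt0 ttn by simp
      have termb: "\<bar>g (tt i) * (w (tt (Suc i)) - w (tt i)) - (\<Psi> (tt (Suc i)) - \<Psi> (tt i))\<bar>
                  \<le> G * \<epsilon> * (t / real n)" if i: "i < n" for i
      proof -
        define h where "h s = g s * w (tt (Suc i)) - \<Phi> s" for s
        have eq: "g (tt i) * (w (tt (Suc i)) - w (tt i)) - (\<Psi> (tt (Suc i)) - \<Psi> (tt i))
                 = - (h (tt (Suc i)) - h (tt i))"
          unfolding h_def \<Psi>_def by (simp add: algebra_simps)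
        have sub: "{tt i..tt (Suc i)} \<subseteq> {0..t}"
          using ttin[of i] ttin[of "Suc i"] i by auto
        have dh: "(h has_field_derivative (g' s * w (tt (Suc i)) - \<phi> s)) (at s within {tt i..tt (Suc i)})"
          if "s \<in> {tt i..tt (Suc i)}" for s
        proof -
          have "(\<Phi> has_field_derivative \<phi> s) (at s within {tt i..tt (Suc i)})"
            using DERIV_subset[OF dPhi sub] that sub by auto
          then show ?thesis unfolding h_def
            by (auto intro!: derivative_eq_intros dg)
        qed
        have bd: "norm (g' s * w (tt (Suc i)) - \<phi> s) \<le> G * \<epsilon>" if s: "s \<in> {tt i..tt (Suc i)}" for s
        proof -
          have "g' s * w (tt (Suc i)) - \<phi> s = g' s * (w (tt (Suc i)) - w s)"
            unfolding \<phi>_def by (simp add: algebra_simps)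
          moreover have "\<bar>w (tt (Suc i)) - w s\<bar> \<le> \<epsilon>"
          proof -
            have "dist (tt (Suc i)) s < d" using s ttstep[of i] small
              by (auto simp: dist_real_def)
            then have "dist (w (tt (Suc i))) (w s) < \<epsilon>"
              using dd[of s "tt (Suc i)"] s sub ttin[of "Suc i"] i by auto
            then show ?thesis by (simp add: dist_real_def)
          qed
          moreover have "\<bar>g' s\<bar> \<le> G" using Gb s sub by auto
          ultimately show ?thesis
            by (simp add: abs_mult mult_mono' G0)
        qed
        have le: "tt i \<le> tt (Suc i)" using ttstep[of i] tnpos by linarith
        have "norm (h (tt (Suc i)) - h (tt i)) \<le> G * \<epsilon> * norm (tt (Suc i) - tt i)"
          by (rule field_differentiable_bound[OF convex_real_interval(5) dh bd])
             (use le in \<open>auto\<close>)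
        then show ?thesis using eq ttstep[of i] t npos by (simp add: abs_of_pos)
      qed
      have Seq: "?S n = (\<Sum>i<n. g (tt i) * (w (tt (Suc i)) - w (tt i)))"
        by (simp add: g_def tt_def)
      have "norm (?S n - (\<Psi> t - \<Psi> 0)) = \<bar>\<Sum>i<n. g (tt i) * (w (tt (Suc i)) - w (tt i)) - (\<Psi> (tt (Suc i)) - \<Psi> (tt i))\<bar>"
        by (simp only: Seq tele sum_subtractf real_norm_def)
      also have "\<dots> \<le> (\<Sum>i<n. \<bar>g (tt i) * (w (tt (Suc i)) - w (tt i)) - (\<Psi> (tt (Suc i)) - \<Psi> (tt i))\<bar>)"
        by (rule sum_abs)
      also have "\<dots> \<le> (\<Sum>i<n. G * \<epsilon> * (t / real n))"
        by (rule sum_mono) (use termb in auto)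
      also have "\<dots> = G * \<epsilon> * t" using npos by simp
      also have "\<dots> < r"
      proof -
        have G1: "G + 1 > 0" using G0 by simp
        have e: "\<epsilon> * t = r / (2 * (G + 1))" unfolding \<epsilon>_def using t G1 by simp
        have "G * \<epsilon> * t = G * (r / (2 * (G + 1)))" using e by (simp add: mult.assoc)
        also have "\<dots> = r * (G / (G + 1)) / 2" by (simp add: ac_simps)
        also have "\<dots> < r" using r G1 G0 by (simp add: divide_less_eq)
        finally show ?thesis .
      qed
      finally show "norm (?S n - (\<Psi> t - \<Psi> 0)) < r" .
    qed
  qed
  then show ?thesis by (rule convergentI)
qed

definition rsum :: "real \<Rightarrow> real \<Rightarrow> (real \<Rightarrow> 'a \<Rightarrow> real) \<Rightarrow> nat \<Rightarrow> 'a \<Rightarrow> real" where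
  "rsum \<mu> t B n \<omega> = (\<Sum>i<n. exp (\<mu> * (t - t*real i/real n)) *
        (B (t*real (Suc i)/real n) \<omega> - B (t*real i/real n) \<omega>))"

definition rvar :: "real \<Rightarrow> real \<Rightarrow> nat \<Rightarrow> real" where
  "rvar \<mu> t n = (\<Sum>i<n. (exp (\<mu> * (t - t*real i/real n)))\<^sup>2 * (t / real n))"

lemma rvar_nonneg: "t \<ge> 0 \<Longrightarrow> rvar \<mu> t n \<ge> 0"
  unfolding rvar_def by (intro sum_nonneg) auto

lemma rsum_normal:
  assumes M: "prob_space M" and B: "std_bm M B" and t: "t > 0" and n: "n > 0" and c: "c \<noteq> 0"
  shows "distributed M lborel (\<lambda>\<omega>. c * rsum \<mu> t B n \<omega>) (normal_density 0 (sqrt (c\<^sup>2 * rvar \<mu> t n)))"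
proof -
  interpret prob_space M by fact
  define ts where "ts i = t*real i/real n" for i
  have sm: "strict_mono ts" unfolding strict_mono_def ts_def using t n
    by (auto simp: divide_strict_right_mono)
  have ts0: "ts 0 = 0" by (simp add: ts_def)
  have ind: "indep_vars (\<lambda>_. borel) (\<lambda>i \<omega>. B (ts (Suc i)) \<omega> - B (ts i) \<omega>) UNIV"
    using B sm ts0 unfolding std_bm_def by auto
  have step: "ts (Suc i) - ts i = t / real n" for i
    by (simp add: ts_def add_divide_distrib distrib_left)
  have dist: "distributed M lborel (\<lambda>\<omega>. B (ts (Suc i)) \<omega> - B (ts i) \<omega>) (normal_density 0 (sqrt (t/real n)))" for i
  proof -
    have "ts i < ts (Suc i)" using sm by (simp add: strict_mono_def)
    moreover have "0 \<le> ts i" using t by (simp add: ts_def)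
    ultimately show ?thesis using B step[of i] unfolding std_bm_def by metis
  qed
  define a where "a i = c * exp (\<mu> * (t - ts i))" for i
  have a0: "a i \<noteq> 0" for i using c by (simp add: a_def)
  define \<sigma> where "\<sigma> i = \<bar>a i\<bar> * sqrt (t/real n)" for i
  have \<sigma>pos: "\<sigma> i > 0" for i using a0 t n by (simp add: \<sigma>_def)
  have Xd: "distributed M lborel (\<lambda>\<omega>. a i * (B (ts (Suc i)) \<omega> - B (ts i) \<omega>)) (normal_density 0 (\<sigma> i))" for i
    using normal_density_affine[OF dist[of i] _ a0[of i], of 0] t n by (simp add: \<sigma>_def)
  have Xi: "indep_vars (\<lambda>_. borel) (\<lambda>i \<omega>. a i * (B (ts (Suc i)) \<omega> - B (ts i) \<omega>)) {..<n}"
    using indep_vars_compose2[OF indep_vars_subset[OF ind subset_UNIV], of "{..<n}" "\<lambda>i x. a i * x" "\<lambda>_. borel"]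
    by simp
  have S: "distributed M lborel (\<lambda>\<omega>. \<Sum>i<n. a i * (B (ts (Suc i)) \<omega> - B (ts i) \<omega>))
       (normal_density (\<Sum>i<n. 0) (sqrt (\<Sum>i<n. (\<sigma> i)\<^sup>2)))"
    by (rule sum_indep_normal[OF _ _ Xi \<sigma>pos Xd]) (use n in auto)
  have eq1: "(\<lambda>\<omega>. \<Sum>i<n. a i * (B (ts (Suc i)) \<omega> - B (ts i) \<omega>)) = (\<lambda>\<omega>. c * rsum \<mu> t B n \<omega>)"
    by (auto simp: rsum_def a_def ts_def sum_distrib_left mult.assoc)
  have eq2: "(\<Sum>i<n. (\<sigma> i)\<^sup>2) = c\<^sup>2 * rvar \<mu> t n"
    using t n by (simp add: \<sigma>_def rvar_def a_def ts_def sum_distrib_left power_mult_distrib mult.assoc)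
  show ?thesis using S unfolding eq1 eq2 by simp
qed

lemma multi_normal:
  fixes w :: "nat \<Rightarrow> real \<Rightarrow> 'a \<Rightarrow> real"
  assumes M: "prob_space M" and bm: "\<forall>k\<ge>1. std_bm M (w k)"
    and ind: "prob_space.indep_vars M (\<lambda>_. Pi\<^sub>M UNIV (\<lambda>_. borel)) (\<lambda>k \<omega> t. w k t \<omega>) {1..}"
    and t: "t > 0" and n: "n > 0" and K: "finite K" "K \<noteq> {}" "K \<subseteq> {1..}" and c: "\<forall>k\<in>K. c k \<noteq> 0"
  shows "distributed M lborel (\<lambda>\<omega>. \<Sum>k\<in>K. c k * rsum (\<mu> k) t (w k) n \<omega>)
           (normal_density 0 (sqrt (\<Sum>k\<in>K. (c k)\<^sup>2 * rvar (\<mu> k) t n)))"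
proof -
  interpret prob_space M by fact
  define Y where "Y k p = c k * (\<Sum>i<n. exp (\<mu> k * (t - t*real i/real n)) *
        (p (t*real (Suc i)/real n) - p (t*real i/real n)))" for k and p :: "real \<Rightarrow> real"
  have Ym: "Y k \<in> measurable (Pi\<^sub>M UNIV (\<lambda>_. borel)) borel" for k
    unfolding Y_def by measurable
  have I: "indep_vars (\<lambda>_. borel) (\<lambda>k \<omega>. Y k (\<lambda>t. w k t \<omega>)) K"
    using indep_vars_compose2[OF indep_vars_subset[OF ind K(3)], of Y "\<lambda>_. borel"] Ym by simp
  have eqY: "(\<lambda>k \<omega>. Y k (\<lambda>t. w k t \<omega>)) = (\<lambda>k \<omega>. c k * rsum (\<mu> k) t (w k) n \<omega>)"
    by (simp add: Y_def rsum_def fun_eq_iff)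
  have vpos: "0 < (c k)\<^sup>2 * rvar (\<mu> k) t n" if "k \<in> K" for k
  proof -
    have "rvar (\<mu> k) t n > 0" unfolding rvar_def using t n
      by (intro sum_pos) auto
    then show ?thesis using c that by simp
  qed
  have "distributed M lborel (\<lambda>\<omega>. \<Sum>k\<in>K. c k * rsum (\<mu> k) t (w k) n \<omega>)
       (normal_density (\<Sum>k\<in>K. 0) (sqrt (\<Sum>k\<in>K. (sqrt ((c k)\<^sup>2 * rvar (\<mu> k) t n))\<^sup>2)))"
    apply (rule sum_indep_normal[OF K(1,2)])
    using I eqY apply simp
    using vpos apply simp
    using rsum_normal[OF M] bm K c t n by auto
  moreover have "(\<Sum>k\<in>K. (sqrt ((c k)\<^sup>2 * rvar (\<mu> k) t n))\<^sup>2) = (\<Sum>k\<in>K. (c k)\<^sup>2 * rvar (\<mu> k) t n)"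
    using vpos by (intro sum.cong) (auto intro: less_imp_le)
  ultimately show ?thesis by simp
qed

lemma normal_moment4:
  assumes M: "prob_space M" and X: "distributed M lborel X (normal_density 0 \<sigma>)" and s: "\<sigma> > 0"
  shows "(\<integral>\<^sup>+\<omega>. ennreal ((X \<omega>)^4) \<partial>M) = ennreal (3 * \<sigma>^4)"
proof -
  have "(\<integral>\<^sup>+\<omega>. ennreal ((X \<omega>)^4) \<partial>M) = (\<integral>\<^sup>+x. normal_density 0 \<sigma> x * ennreal (x^4) \<partial>lborel)"
    using distributed_nn_integral[OF X, of "\<lambda>x. ennreal (x^4)"] by simp
  also have "\<dots> = (\<integral>\<^sup>+x. ennreal (normal_density 0 \<sigma> x * (x - 0)^(2*2)) \<partial>lborel)"
    by (simp add: ennreal_mult)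
  also have "\<dots> = ennreal (integral\<^sup>L lborel (\<lambda>x. normal_density 0 \<sigma> x * (x - 0)^(2*2)))"
    using normal_moment_even[OF s, of 0 2]
    by (intro nn_integral_eq_integral) (auto simp: has_bochner_integral_iff)
  also have "integral\<^sup>L lborel (\<lambda>x. normal_density 0 \<sigma> x * (x - 0)^(2*2)) = fact (2 * 2) / ((2 / \<sigma>\<^sup>2)^2 * fact 2)"
    using normal_moment_even[OF s, of 0 2] by (rule has_bochner_integral_integral_eq)
  also have "\<dots> = 3 * \<sigma>^4" using s by (simp add: fact_numeral field_simps power2_eq_square power4_eq_xxxx)
  finally show ?thesis .
qed

lemma wiener_int_rsum: "wiener_int (\<lambda>s. exp (\<mu> * (t - s))) B t \<omega> = lim (\<lambda>n. rsum \<mu> t B n \<omega>)"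
  by (simp add: wiener_int_def rsum_def)

lemma rsum_measurable:
  assumes "\<And>s. B s \<in> borel_measurable M"
  shows "(\<lambda>\<omega>. rsum \<mu> t B n \<omega>) \<in> borel_measurable M"
  unfolding rsum_def using assms by (intro borel_measurable_sum borel_measurable_times borel_measurable_diff) auto

lemma rsum_tendsto:
  assumes B: "std_bm M B" and t: "t > 0" and \<omega>: "\<omega> \<in> space M"
  shows "(\<lambda>n. rsum \<mu> t B n \<omega>) \<longlonglongrightarrow> wiener_int (\<lambda>s. exp (\<mu> * (t - s))) B t \<omega>"
proof -
  have c: "continuous_on {0..} (\<lambda>s. B s \<omega>)" and z: "B 0 \<omega> = 0" using B \<omega> unfolding std_bm_def by auto
  have "continuous_on {0..t} (\<lambda>s. B s \<omega>)" by (rule continuous_on_subset[OF c]) auto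
  from rs_convergent[OF t this, of \<mu>] z have "convergent (\<lambda>n. rsum \<mu> t B n \<omega>)"
    by (simp add: rsum_def)
  then show ?thesis unfolding wiener_int_rsum by (simp add: convergent_LIMSEQ_iff)
qed

lemma moment_bound:
  fixes w :: "nat \<Rightarrow> real \<Rightarrow> 'a \<Rightarrow> real"
  assumes M: "prob_space M" and bm: "\<forall>k\<ge>1. std_bm M (w k)"
    and ind: "prob_space.indep_vars M (\<lambda>_. Pi\<^sub>M UNIV (\<lambda>_. borel)) (\<lambda>k \<omega> t. w k t \<omega>) {1..}"
    and t: "t > 0" and K: "finite K" "K \<subseteq> {1..}"
    and V: "\<And>k n. k \<in> K \<Longrightarrow> n > 0 \<Longrightarrow> rvar (\<mu> k) t n \<le> V k"
  shows "(\<integral>\<^sup>+\<omega>. ennreal ((\<Sum>k\<in>K. c k * wiener_int (\<lambda>s. exp (\<mu> k * (t - s))) (w k) t \<omega>)^4) \<partial>M)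
           \<le> ennreal (3 * (\<Sum>k\<in>K. (c k)\<^sup>2 * V k)\<^sup>2)"
proof -
  interpret prob_space M by fact
  define K' where "K' = {k\<in>K. c k \<noteq> 0}"
  have K': "finite K'" "K' \<subseteq> K" using K by (auto simp: K'_def)
  define Z where "Z k \<omega> = wiener_int (\<lambda>s. exp (\<mu> k * (t - s))) (w k) t \<omega>" for k \<omega>
  define G where "G n \<omega> = (\<Sum>k\<in>K'. c k * rsum (\<mu> k) t (w k) n \<omega>)" for n \<omega>
  have sumK: "(\<Sum>k\<in>K. c k * Z k \<omega>) = (\<Sum>k\<in>K'. c k * Z k \<omega>)" for \<omega>
    by (rule sum.mono_neutral_right) (use K K' in \<open>auto simp: K'_def\<close>)
  have wm: "w k s \<in> borel_measurable M" if "k \<in> K" for k s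
    using bm K that unfolding std_bm_def by auto
  have Gm: "G n \<in> borel_measurable M" for n
    unfolding G_def using K' wm by (intro borel_measurable_sum borel_measurable_times rsum_measurable) auto
  have Glim: "(\<lambda>n. ennreal ((G n \<omega>)^4)) \<longlonglongrightarrow> ennreal ((\<Sum>k\<in>K. c k * Z k \<omega>)^4)" if \<omega>: "\<omega> \<in> space M" for \<omega>
  proof -
    have "(\<lambda>n. G n \<omega>) \<longlonglongrightarrow> (\<Sum>k\<in>K'. c k * Z k \<omega>)"
      unfolding G_def Z_def
      by (intro tendsto_sum tendsto_mult_left rsum_tendsto[OF _ t \<omega>]) (use bm K K' in auto)
    then show ?thesis unfolding sumK by (intro tendsto_ennrealI tendsto_power)
  qed
  define B where "B = 3 * (\<Sum>k\<in>K. (c k)\<^sup>2 * V k)\<^sup>2"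
  have Vnn: "V k \<ge> 0" if "k \<in> K" for k
    using V[OF that, of 1] rvar_nonneg[of t "\<mu> k" 1] t by simp
  have Gb: "(\<integral>\<^sup>+\<omega>. ennreal ((G n \<omega>)^4) \<partial>M) \<le> ennreal B" for n
  proof (cases "n = 0 \<or> K' = {}")
    case True
    then have "G n \<omega> = 0" for \<omega> by (auto simp: G_def rsum_def)
    then show ?thesis by simp
  next
    case False
    then have n: "n > 0" and ne: "K' \<noteq> {}" by auto
    have d: "distributed M lborel (G n) (normal_density 0 (sqrt (\<Sum>k\<in>K'. (c k)\<^sup>2 * rvar (\<mu> k) t n)))"
      unfolding G_def
      by (rule multi_normal[OF M bm ind t n K'(1) ne]) (use K K' in \<open>auto simp: K'_def\<close>)
    define S where "S = (\<Sum>k\<in>K'. (c k)\<^sup>2 * rvar (\<mu> k) t n)"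
    have Spos: "S > 0" unfolding S_def
    proof (intro sum_pos K'(1) ne)
      fix k assume "k \<in> K'"
      moreover have "rvar (\<mu> k) t n > 0" unfolding rvar_def using t n by (intro sum_pos) auto
      ultimately show "0 < (c k)\<^sup>2 * rvar (\<mu> k) t n" by (simp add: K'_def)
    qed
    have "(\<integral>\<^sup>+\<omega>. ennreal ((G n \<omega>)^4) \<partial>M) = ennreal (3 * (sqrt S)^4)"
      using normal_moment4[OF M d[folded S_def]] Spos by simp
    also have "3 * (sqrt S)^4 = 3 * S\<^sup>2" using Spos
      by (metis less_imp_le power2_eq_square power4_eq_xxxx real_sqrt_pow2 mult.assoc)
    finally have eqI: "(\<integral>\<^sup>+\<omega>. ennreal ((G n \<omega>)^4) \<partial>M) = ennreal (3 * S\<^sup>2)" .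
    have "S \<le> (\<Sum>k\<in>K. (c k)\<^sup>2 * V k)"
    proof -
      have "S \<le> (\<Sum>k\<in>K'. (c k)\<^sup>2 * V k)" unfolding S_def
        by (intro sum_mono mult_left_mono V n) (use K' in auto)
      also have "\<dots> \<le> (\<Sum>k\<in>K. (c k)\<^sup>2 * V k)"
        by (rule sum_mono2[OF K(1) K'(2)]) (use Vnn in auto)
      finally show ?thesis .
    qed
    then have "3 * S\<^sup>2 \<le> B" unfolding B_def using Spos by (simp add: power_mono)
    then show ?thesis unfolding eqI by (rule ennreal_leI)
  qed
  have "(\<integral>\<^sup>+\<omega>. ennreal ((\<Sum>k\<in>K. c k * Z k \<omega>)^4) \<partial>M)
        = (\<integral>\<^sup>+\<omega>. liminf (\<lambda>n. ennreal ((G n \<omega>)^4)) \<partial>M)"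
    by (intro nn_integral_cong) (simp add: lim_imp_Liminf[OF _ Glim])
  also have "\<dots> \<le> liminf (\<lambda>n. \<integral>\<^sup>+\<omega>. ennreal ((G n \<omega>)^4) \<partial>M)"
    by (intro nn_integral_liminf) (use Gm in measurable)
  also have "\<dots> \<le> liminf (\<lambda>n. ennreal B)"
    by (intro Liminf_mono) (use Gb in auto)
  also have "\<dots> = ennreal B" by (simp add: Liminf_const)
  finally show ?thesis unfolding B_def Z_def .
qed

lemma holder4:
  fixes a w :: "'i \<Rightarrow> real"
  assumes I: "finite I" "I \<noteq> {}" and w: "\<And>i. i \<in> I \<Longrightarrow> w i > 0"
  shows "(\<Sum>i\<in>I. a i)^4 \<le> (\<Sum>i\<in>I. w i)^3 * (\<Sum>i\<in>I. (a i)^4 / (w i)^3)"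
proof -
  define W where "W = (\<Sum>i\<in>I. w i)"
  have W: "W > 0" unfolding W_def using I w by (intro sum_pos) auto
  have "(\<Sum>i\<in>I. (w i / W) *\<^sub>R (W * a i / w i))^4 \<le> (\<Sum>i\<in>I. (w i / W) * (W * a i / w i)^4)"
    by (rule convex_on_sum[OF I convex_power_even[of 4]])
       (use W w in \<open>auto simp: W_def sum_divide_distrib[symmetric] less_imp_le\<close>)
  moreover have "(\<Sum>i\<in>I. (w i / W) *\<^sub>R (W * a i / w i)) = (\<Sum>i\<in>I. a i)"
  proof (intro sum.cong refl)
    fix i assume "i \<in> I"
    then have "w i > 0" by (rule w)
    then show "(w i / W) *\<^sub>R (W * a i / w i) = a i" using W by simp
  qed
  moreover have "(\<Sum>i\<in>I. (w i / W) * (W * a i / w i)^4) = W^3 * (\<Sum>i\<in>I. (a i)^4 / (w i)^3)"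
    unfolding sum_distrib_left
  proof (intro sum.cong refl)
    fix i assume i: "i \<in> I"
    then have "w i > 0" by (rule w)
    then show "w i / W * (W * a i / w i) ^ 4 = W ^ 3 * (a i ^ 4 / w i ^ 3)"
      using W by (simp add: field_simps power_mult_distrib)
         (simp add: power4_eq_xxxx power3_eq_cube)
  qed
  ultimately show ?thesis unfolding W_def by simp
qed

lemma sin_lip: "\<bar>sin (a::real) - sin b\<bar> \<le> \<bar>a - b\<bar>"
proof -
  have "norm (sin a - sin b) \<le> 1 * norm (a - b)"
    by (rule field_differentiable_bound[of "UNIV::real set" sin cos 1 a b]) (auto intro!: derivative_eq_intros)
  then show ?thesis by simp
qed

lemma cos_lip: "\<bar>cos (a::real) - cos b\<bar> \<le> \<bar>a - b\<bar>"
proof -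
  have "norm (cos a - cos b) \<le> 1 * norm (a - b)"
    by (rule field_differentiable_bound[of "UNIV::real set" cos "\<lambda>x. - sin x" 1 a b]) (auto intro!: derivative_eq_intros)
  then show ?thesis by simp
qed

definition rho :: real where "rho = 2 powr (-1/16)"
definition Gam :: real where "Gam = 1 / (1 - rho)"
definition chain_const :: "real \<Rightarrow> real" where
  "chain_const L = Gam^3 * (1 + L powr (5/4) * Gam / rho^3)"

lemma rho_pos: "rho > 0" and rho_lt1: "rho < 1"
proof -
  show "rho > 0" by (simp add: rho_def)
  have "2 powr (-1/16::real) < 2 powr 0" by (rule powr_less_mono) auto
  then show "rho < 1" by (simp add: rho_def)
qed

lemma Gam_pos: "Gam > 0" using rho_lt1 by (simp add: Gam_def)

lemma sum_rho_le: "(\<Sum>i\<le>n. rho^i) \<le> Gam"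
proof -
  have "(\<Sum>i\<le>n. rho^i) = (\<Sum>i<Suc n. rho^i)" by (simp add: lessThan_Suc_atMost)
  also have "\<dots> = (1 - rho^Suc n) / (1 - rho)" using rho_lt1 by (subst sum_gp_strict) auto
  also have "\<dots> \<le> 1 / (1 - rho)" using rho_lt1 rho_pos
    by (intro divide_right_mono) auto
  finally show ?thesis by (simp add: Gam_def)
qed

lemma chain_const_pos: "L > 0 \<Longrightarrow> chain_const L > 0"
  unfolding chain_const_def using Gam_pos rho_pos by (intro mult_pos_pos add_pos_nonneg) auto

lemma dyadic_identity:
  assumes L: "L > 0"
  shows "2^j * (L / 2^j) powr (5/4) = L powr (5/4) * rho^(4*j)"
proof -
  have "(L / 2^j) powr (5/4) = L powr (5/4) / (2^j) powr (5/4)" by (rule powr_divide)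
  also have "(2::real)^j = 2 powr (real j)" by (simp add: powr_realpow)
  also have "(2 powr (real j)) powr (5/4) = 2 powr (real j * 5/4)" by (simp add: powr_powr)
  finally have "2^j * (L / 2^j) powr (5/4) = L powr (5/4) * (2 powr (real j) / 2 powr (real j * 5/4))"
    by (simp add: powr_realpow)
  also have "2 powr (real j) / 2 powr (real j * 5/4) = 2 powr (real j - real j * 5/4)"
    by (rule powr_diff[symmetric])
  also have "\<dots> = rho^(4*j)" unfolding rho_def
    by (subst powr_power) (auto simp: algebra_simps)
  finally show ?thesis .
qed

lemma dyadic_bound:
  fixes f :: "real \<Rightarrow> real" and L :: real
  defines "dy \<equiv> \<lambda>j (i::nat). L * real i / 2^j"
  defines "D \<equiv> \<lambda>j. \<Sum>i<2^j. (f (dy j (Suc i)) - f (dy j i))^4"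
  shows "i \<le> 2^m \<Longrightarrow> \<bar>f (dy m i)\<bar> \<le> \<bar>f 0\<bar> + (\<Sum>j\<le>m. root 4 (D j))"
proof (induction m arbitrary: i)
  have key: "\<bar>f (dy j (Suc i)) - f (dy j i)\<bar> \<le> root 4 (D j)" if "i < 2^j" for i j
  proof -
    have "(f (dy j (Suc i)) - f (dy j i))^4 \<le> D j"
      unfolding D_def by (rule member_le_sum) (use that in auto)
    then have "\<bar>f (dy j (Suc i)) - f (dy j i)\<bar>^4 \<le> D j"
      by (simp add: power_even_abs_numeral)
    then have "root 4 (\<bar>f (dy j (Suc i)) - f (dy j i)\<bar>^4) \<le> root 4 (D j)"
      by (rule real_root_le_mono[rotated]) simp
    then show ?thesis by (metis abs_ge_zero real_root_power_cancel zero_less_numeral)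
  qed
  have Dnn: "D j \<ge> 0" for j unfolding D_def by (intro sum_nonneg) (simp add: zero_le_even_power)
  case 0
  then have "i = 0 \<or> i = 1" by auto
  then show ?case
  proof
    assume "i = 0" then show ?thesis using Dnn[of 0] by (simp add: dy_def)
  next
    assume i: "i = 1"
    have "\<bar>f (dy 0 1)\<bar> \<le> \<bar>f (dy 0 0)\<bar> + \<bar>f (dy 0 (Suc 0)) - f (dy 0 0)\<bar>" by simp
    also have "\<dots> \<le> \<bar>f 0\<bar> + root 4 (D 0)" using key[of 0 0] by (simp add: dy_def)
    finally show ?thesis using i by simp
  qed
next
  have key: "\<bar>f (dy j (Suc i)) - f (dy j i)\<bar> \<le> root 4 (D j)" if "i < 2^j" for i j
  proof -
    have "(f (dy j (Suc i)) - f (dy j i))^4 \<le> D j"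
      unfolding D_def by (rule member_le_sum) (use that in auto)
    then have "\<bar>f (dy j (Suc i)) - f (dy j i)\<bar>^4 \<le> D j"
      by (simp add: power_even_abs_numeral)
    then have "root 4 (\<bar>f (dy j (Suc i)) - f (dy j i)\<bar>^4) \<le> root 4 (D j)"
      by (rule real_root_le_mono[rotated]) simp
    then show ?thesis by (metis abs_ge_zero real_root_power_cancel zero_less_numeral)
  qed
  have Dnn: "D j \<ge> 0" for j unfolding D_def by (intro sum_nonneg) (simp add: zero_le_even_power)
  case (Suc m)
  have sucsum: "(\<Sum>j\<le>Suc m. root 4 (D j)) = (\<Sum>j\<le>m. root 4 (D j)) + root 4 (D (Suc m))" by simp
  have rnn: "root 4 (D (Suc m)) \<ge> 0" using Dnn by simp
  obtain l where l: "i = 2*l \<or> i = Suc (2*l)" by (metis oddE evenE Suc_eq_plus1)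
  have dyeven: "dy (Suc m) (2*l) = dy m l" by (simp add: dy_def)
  show ?case using l
  proof
    assume i: "i = 2*l"
    then have "l \<le> 2^m" using Suc.prems by simp
    then have "\<bar>f (dy m l)\<bar> \<le> \<bar>f 0\<bar> + (\<Sum>j\<le>m. root 4 (D j))" by (rule Suc.IH)
    moreover have "dy (Suc m) i = dy m l" using i dyeven by simp
    ultimately show ?thesis unfolding sucsum using rnn by (metis add.assoc add_increasing2)
  next
    assume i: "i = Suc (2*l)"
    then have lt: "2*l < 2^Suc m" using Suc.prems by simp
    then have "l \<le> 2^m" by simp
    then have h1: "\<bar>f (dy m l)\<bar> \<le> \<bar>f 0\<bar> + (\<Sum>j\<le>m. root 4 (D j))" by (rule Suc.IH)
    have h2: "\<bar>f (dy (Suc m) (Suc (2*l))) - f (dy (Suc m) (2*l))\<bar> \<le> root 4 (D (Suc m))"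
      by (rule key[OF lt])
    have "\<bar>f (dy (Suc m) i)\<bar> \<le> \<bar>f (dy (Suc m) (2*l))\<bar> + \<bar>f (dy (Suc m) (Suc (2*l))) - f (dy (Suc m) (2*l))\<bar>"
      using i by simp
    moreover have "\<bar>f (dy (Suc m) (2*l))\<bar> = \<bar>f (dy m l)\<bar>" using dyeven by simp
    ultimately show ?thesis unfolding sucsum using h1 h2 by linarith
  qed
qed

lemma pointwise_sup:
  fixes f :: "real \<Rightarrow> real" and L :: real
  assumes L: "L > 0" and cf: "continuous_on {0..L} f"
  shows "ennreal ((SUP x\<in>{0..L}. \<bar>f x\<bar>)^4) \<le>
    (SUP m. ennreal ((\<bar>f 0\<bar> + (\<Sum>j\<le>m. root 4 (\<Sum>i<2^j. (f (L * real (Suc i) / 2^j) - f (L * real i / 2^j))^4)))^4))"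
    (is "_ \<le> ?S")
proof -
  define Bm where "Bm m = \<bar>f 0\<bar> + (\<Sum>j\<le>m. root 4 (\<Sum>i<2^j. (f (L * real (Suc i) / 2^j) - f (L * real i / 2^j))^4))" for m
  have dyb: "\<bar>f (L * real i / 2^m)\<bar> \<le> Bm m" if "i \<le> 2^m" for i m
    using dyadic_bound[of i m f L] that unfolding Bm_def by simp
  have pt: "ennreal (\<bar>f x\<bar>^4) \<le> ?S" if x: "x \<in> {0..L}" for x
  proof -
    define im where "im m = nat \<lfloor>x * 2^m / L\<rfloor>" for m :: nat
    define xm where "xm m = L * real (im m) / 2^m" for m :: nat
    have fl: "real (im m) = \<lfloor>x * 2^m / L\<rfloor>" for m
      unfolding im_def using x L by simp
    have im_le: "im m \<le> 2^m" for m
    proof -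
      have "x * 2^m \<le> L * 2^m" using x by (intro mult_right_mono) auto
      then have "x * 2^m / L \<le> 2^m" by (subst pos_divide_le_eq[OF L]) (simp add: mult.commute)
      then have "\<lfloor>x * 2^m / L\<rfloor> \<le> \<lfloor>(2::real)^m\<rfloor>" by (rule floor_mono)
      then have "\<lfloor>x * 2^m / L\<rfloor> \<le> int (2^m)" by simp
      then show ?thesis unfolding im_def by (simp only: nat_le_iff)
    qed
    have xm_le: "xm m \<le> x" for m
    proof -
      have "real (im m) \<le> x * 2^m / L" using fl[of m] by simp
      then have "L * real (im m) \<le> L * (x * 2^m / L)" using L by (intro mult_left_mono) auto
      also have "L * (x * 2^m / L) = x * 2^m" using L by simp
      finally have "L * real (im m) \<le> x * 2^m" .
      then show ?thesis unfolding xm_def by (subst pos_divide_le_eq) auto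
    qed
    have xm_ge: "x - L / 2^m \<le> xm m" for m
    proof -
      have "x * 2^m / L - 1 \<le> real (im m)" using fl[of m] by linarith
      then have "L * (x * 2^m / L - 1) / 2^m \<le> L * real (im m) / 2^m" using L
        by (intro divide_right_mono mult_left_mono) auto
      moreover have "L * (x * 2^m / L - 1) / 2^m = x - L / 2^m"
      proof -
        have "L * (x * 2^m / L - 1) = x * 2^m - L" using L by (simp add: right_diff_distrib)
        then show ?thesis by (simp add: diff_divide_distrib)
      qed
      ultimately show ?thesis unfolding xm_def by simp
    qed
    have xm_in: "xm m \<in> {0..L}" for m
    proof -
      have "0 \<le> xm m" unfolding xm_def using L by simp
      moreover have "xm m \<le> L" using xm_le[of m] x by simp
      ultimately show ?thesis by simp
    qed
    have "(\<lambda>m. L / 2^m) \<longlonglongrightarrow> 0"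
      by (intro LIMSEQ_divide_realpow_zero) auto
    then have "(\<lambda>m. x - L / 2^m) \<longlonglongrightarrow> x - 0" by (intro tendsto_diff) auto
    then have t1: "(\<lambda>m. x - L / 2^m) \<longlonglongrightarrow> x" by simp
    have e1: "\<forall>\<^sub>F m in sequentially. x - L / 2^m \<le> xm m"
      using xm_ge by (intro always_eventually allI) 
    have e2: "\<forall>\<^sub>F m in sequentially. xm m \<le> x"
      using xm_le by (intro always_eventually allI)
    have xmt: "xm \<longlonglongrightarrow> x"
      by (rule real_tendsto_sandwich[OF e1 e2 t1 tendsto_const])
    have "(\<lambda>m. f (xm m)) \<longlonglongrightarrow> f x"
      by (rule continuous_on_tendsto_compose[OF cf xmt x]) (intro always_eventually allI xm_in)
    then have lim: "(\<lambda>m. ennreal (\<bar>f (xm m)\<bar>^4)) \<longlonglongrightarrow> ennreal (\<bar>f x\<bar>^4)"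
      by (intro tendsto_ennrealI tendsto_power tendsto_rabs)
    show ?thesis
    proof (rule LIMSEQ_le_const2[OF lim], intro exI allI impI)
      fix m
      have "\<bar>f (xm m)\<bar> \<le> Bm m" unfolding xm_def by (rule dyb[OF im_le])
      then have "\<bar>f (xm m)\<bar>^4 \<le> (Bm m)^4" by (intro power_mono) auto
      then have "ennreal (\<bar>f (xm m)\<bar>^4) \<le> ennreal ((Bm m)^4)" by (rule ennreal_leI)
      also have "\<dots> \<le> ?S" unfolding Bm_def by (rule SUP_upper) simp
      finally show "ennreal (\<bar>f (xm m)\<bar>^4) \<le> ?S" .
    qed
  qed
  have bdd: "bdd_above ((\<lambda>x. \<bar>f x\<bar>) ` {0..L})"
  proof -
    have "compact ((\<lambda>x. \<bar>f x\<bar>) ` {0..L})"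
      by (intro compact_continuous_image continuous_intros cf) simp
    then show ?thesis by (intro bounded_imp_bdd_above compact_imp_bounded)
  qed
  show ?thesis
  proof (cases "?S = top")
    case True then show ?thesis by (metis top_greatest)
  next
    case False
    then obtain s where s: "?S = ennreal s" "s \<ge> 0" by (cases "?S") auto
    have le: "\<bar>f x\<bar> \<le> root 4 s" if "x \<in> {0..L}" for x
    proof -
      have "ennreal (\<bar>f x\<bar>^4) \<le> ennreal s" using pt[OF that] s by simp
      then have "\<bar>f x\<bar>^4 \<le> s" using s(2) by (simp add: ennreal_le_iff)
      then have "root 4 (\<bar>f x\<bar>^4) \<le> root 4 s" by (rule real_root_le_mono[rotated]) simp
      then show ?thesis by (metis abs_ge_zero real_root_power_cancel zero_less_numeral)
    qed
    have sup_le: "(SUP x\<in>{0..L}. \<bar>f x\<bar>) \<le> root 4 s"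
      by (rule cSUP_least) (use L le in auto)
    have sup_ge: "0 \<le> (SUP x\<in>{0..L}. \<bar>f x\<bar>)"
    proof -
      have "\<bar>f 0\<bar> \<le> (SUP x\<in>{0..L}. \<bar>f x\<bar>)" by (rule cSUP_upper[OF _ bdd]) (use L in auto)
      then show ?thesis by linarith
    qed
    have "(SUP x\<in>{0..L}. \<bar>f x\<bar>)^4 \<le> (root 4 s)^4" by (rule power_mono[OF sup_le sup_ge])
    also have "\<dots> = s" using s(2) by simp
    finally show ?thesis using s by (simp add: ennreal_leI)
  qed
qed

lemma nn_integral_ennreal_cmult:
  assumes "0 \<le> k" "g \<in> borel_measurable M"
  shows "(\<integral>\<^sup>+\<omega>. ennreal (k * g \<omega>) \<partial>M) = ennreal k * (\<integral>\<^sup>+\<omega>. ennreal (g \<omega>) \<partial>M)"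
proof -
  have "(\<integral>\<^sup>+\<omega>. ennreal (k * g \<omega>) \<partial>M) = (\<integral>\<^sup>+\<omega>. ennreal k * ennreal (g \<omega>) \<partial>M)"
    using assms(1) by (simp add: ennreal_mult')
  also have "\<dots> = ennreal k * (\<integral>\<^sup>+\<omega>. ennreal (g \<omega>) \<partial>M)"
    using assms(2) by (intro nn_integral_cmult) auto
  finally show ?thesis .
qed

lemma aux_cancel: "x \<noteq> 0 \<Longrightarrow> a \<noteq> 0 \<Longrightarrow> 1 / (a * x) * (b * x) = b / (a::real)"
  by (simp add: field_simps)

lemma chaining:
  fixes F :: "'a \<Rightarrow> real \<Rightarrow> real" and M :: "'a measure"
  assumes L: "L > 0" and cont: "\<And>\<omega>. \<omega> \<in> space M \<Longrightarrow> continuous_on {0..L} (F \<omega>)"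
    and meas: "\<And>x. (\<lambda>\<omega>. F \<omega> x) \<in> borel_measurable M"
    and m0: "(\<integral>\<^sup>+\<omega>. ennreal ((F \<omega> 0)^4) \<partial>M) \<le> ennreal a"
    and md: "\<And>x y. x \<in> {0..L} \<Longrightarrow> y \<in> {0..L} \<Longrightarrow>
               (\<integral>\<^sup>+\<omega>. ennreal ((F \<omega> x - F \<omega> y)^4) \<partial>M) \<le> ennreal (b * \<bar>x - y\<bar> powr (5/4))"
    and a: "a \<ge> 0" and b: "b \<ge> 0"
  shows "(\<integral>\<^sup>+\<omega>. ennreal ((SUP x\<in>{0..L}. \<bar>F \<omega> x\<bar>)^4) \<partial>M) \<le> ennreal (chain_const L * (a + b))"
proof -
  define \<Delta> where "\<Delta> j i \<omega> = (F \<omega> (L * real (Suc i) / 2^j) - F \<omega> (L * real i / 2^j))^4" for j i \<omega>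
  define D where "D j \<omega> = (\<Sum>i<2^j. \<Delta> j i \<omega>)" for j \<omega>
  define Bm where "Bm m \<omega> = \<bar>F \<omega> 0\<bar> + (\<Sum>j\<le>m. root 4 (D j \<omega>))" for m \<omega>
  have \<Delta>nn: "\<Delta> j i \<omega> \<ge> 0" for j i \<omega> unfolding \<Delta>_def by (simp add: zero_le_even_power)
  have Dnn: "D j \<omega> \<ge> 0" for j \<omega> unfolding D_def using \<Delta>nn by (intro sum_nonneg) auto
  have Bnn: "Bm m \<omega> \<ge> 0" for m \<omega> unfolding Bm_def using Dnn by (intro add_nonneg_nonneg sum_nonneg) auto
  have \<Delta>m: "\<Delta> j i \<in> borel_measurable M" for j i
    unfolding \<Delta>_def by (intro borel_measurable_power borel_measurable_diff meas)
  have Dm: "D j \<in> borel_measurable M" for j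
    unfolding D_def using \<Delta>m by (intro borel_measurable_sum) auto
  have Bmm: "Bm m \<in> borel_measurable M" for m
    unfolding Bm_def using Dm
    by (intro borel_measurable_add borel_measurable_abs meas borel_measurable_sum
          measurable_compose[OF _ borel_measurable_root]) auto
  have step1: "(\<integral>\<^sup>+\<omega>. ennreal ((SUP x\<in>{0..L}. \<bar>F \<omega> x\<bar>)^4) \<partial>M)
      \<le> (\<integral>\<^sup>+\<omega>. (SUP m. ennreal ((Bm m \<omega>)^4)) \<partial>M)"
    by (rule nn_integral_mono) (use pointwise_sup[OF L cont] in \<open>simp add: Bm_def D_def \<Delta>_def\<close>)
  have inc: "incseq (\<lambda>m \<omega>. ennreal ((Bm m \<omega>)^4))"
  proof (rule incseq_SucI, rule le_funI)
    fix m \<omega>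
    have "Bm m \<omega> \<le> Bm (Suc m) \<omega>" unfolding Bm_def using Dnn by simp
    then show "ennreal ((Bm m \<omega>)^4) \<le> ennreal ((Bm (Suc m) \<omega>)^4)"
      using Bnn by (intro ennreal_leI power_mono) auto
  qed
  have step2: "(\<integral>\<^sup>+\<omega>. (SUP m. ennreal ((Bm m \<omega>)^4)) \<partial>M) = (SUP m. \<integral>\<^sup>+\<omega>. ennreal ((Bm m \<omega>)^4) \<partial>M)"
    by (rule nn_integral_monotone_convergence_SUP[OF inc]) (use Bmm in measurable)
  define c where "c j = 1 / (rho^(Suc j))^3" for j :: nat
  have cnn: "c j \<ge> 0" for j unfolding c_def using rho_pos by simp
  define h where "h j = b * (L / 2^j) powr (5/4)" for j :: nat
  have hnn: "h j \<ge> 0" for j unfolding h_def using b by simp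
  have step3: "(\<integral>\<^sup>+\<omega>. ennreal ((Bm m \<omega>)^4) \<partial>M) \<le> ennreal (chain_const L * (a + b))" for m
  proof -
    have pw: "(Bm m \<omega>)^4 \<le> Gam^3 * ((F \<omega> 0)^4 + (\<Sum>j\<le>m. c j * D j \<omega>))" for \<omega>
    proof -
      define A where "A i = (if i = 0 then \<bar>F \<omega> 0\<bar> else root 4 (D (i - 1) \<omega>))" for i :: nat
      have H: "(\<Sum>i\<le>Suc m. A i)^4 \<le> (\<Sum>i\<le>Suc m. rho^i)^3 * (\<Sum>i\<le>Suc m. (A i)^4 / (rho^i)^3)"
        by (rule holder4) (simp_all add: rho_pos)
      have e1: "(\<Sum>i\<le>Suc m. A i) = Bm m \<omega>"
        unfolding sum.atMost_Suc_shift Bm_def by (simp add: A_def)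
      have e2: "(\<Sum>i\<le>Suc m. (A i)^4 / (rho^i)^3) = (F \<omega> 0)^4 + (\<Sum>j\<le>m. c j * D j \<omega>)"
      proof -
        have "(\<Sum>i\<le>Suc m. (A i)^4 / (rho^i)^3) = (A 0)^4 / (rho^0)^3 + (\<Sum>j\<le>m. (A (Suc j))^4 / (rho^(Suc j))^3)"
          by (rule sum.atMost_Suc_shift)
        also have "(A 0)^4 / (rho^0)^3 = (F \<omega> 0)^4" by (simp add: A_def power_even_abs_numeral)
        also have "(\<Sum>j\<le>m. (A (Suc j))^4 / (rho^(Suc j))^3) = (\<Sum>j\<le>m. c j * D j \<omega>)"
        proof (rule sum.cong[OF refl])
          fix j
          have "(A (Suc j))^4 = D j \<omega>" unfolding A_def using Dnn[of j \<omega>] by simp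
          then show "(A (Suc j))^4 / (rho^(Suc j))^3 = c j * D j \<omega>" unfolding c_def by simp
        qed
        finally show ?thesis .
      qed
      have nnR: "0 \<le> (F \<omega> 0)^4 + (\<Sum>j\<le>m. c j * D j \<omega>)"
        using cnn Dnn by (intro add_nonneg_nonneg sum_nonneg mult_nonneg_nonneg) (auto simp: zero_le_even_power)
      have "(\<Sum>i\<le>Suc m. rho^i)^3 \<le> Gam^3"
        using sum_rho_le[of "Suc m"] rho_pos by (intro power_mono sum_nonneg) auto
      then have "(\<Sum>i\<le>Suc m. rho^i)^3 * ((F \<omega> 0)^4 + (\<Sum>j\<le>m. c j * D j \<omega>)) \<le> Gam^3 * ((F \<omega> 0)^4 + (\<Sum>j\<le>m. c j * D j \<omega>))"
        using nnR by (rule mult_right_mono)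
      moreover have "(Bm m \<omega>)^4 \<le> (\<Sum>i\<le>Suc m. rho^i)^3 * ((F \<omega> 0)^4 + (\<Sum>j\<le>m. c j * D j \<omega>))"
        using H unfolding e1 e2 .
      ultimately show ?thesis by (rule order_trans[rotated])
    qed
    have pw2: "ennreal ((Bm m \<omega>)^4) \<le> ennreal (Gam^3 * (F \<omega> 0)^4) + (\<Sum>j\<le>m. \<Sum>i<2^j. ennreal (Gam^3 * c j * \<Delta> j i \<omega>))" for \<omega>
    proof -
      have "ennreal ((Bm m \<omega>)^4) \<le> ennreal (Gam^3 * ((F \<omega> 0)^4 + (\<Sum>j\<le>m. c j * D j \<omega>)))"
        by (rule ennreal_leI[OF pw])
      also have "Gam^3 * ((F \<omega> 0)^4 + (\<Sum>j\<le>m. c j * D j \<omega>)) = Gam^3 * (F \<omega> 0)^4 + (\<Sum>j\<le>m. \<Sum>i<2^j. Gam^3 * c j * \<Delta> j i \<omega>)"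
        by (simp add: D_def distrib_left sum_distrib_left mult.assoc)
      also have "ennreal \<dots> = ennreal (Gam^3 * (F \<omega> 0)^4) + (\<Sum>j\<le>m. \<Sum>i<2^j. ennreal (Gam^3 * c j * \<Delta> j i \<omega>))"
      proof -
        have t1: "0 \<le> Gam^3 * c j * \<Delta> j i \<omega>" for j i
          using Gam_pos cnn \<Delta>nn by simp
        have t2: "0 \<le> (\<Sum>i<2^j. Gam^3 * c j * \<Delta> j i \<omega>)" for j
          using t1 by (intro sum_nonneg) auto
        have t0: "0 \<le> Gam^3 * (F \<omega> 0)^4" using Gam_pos by (simp add: zero_le_even_power)
        have "(\<Sum>j\<le>m. \<Sum>i<2^j. ennreal (Gam^3 * c j * \<Delta> j i \<omega>)) = (\<Sum>j\<le>m. ennreal (\<Sum>i<2^j. Gam^3 * c j * \<Delta> j i \<omega>))"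
          using t1 by (intro sum.cong refl sum_ennreal)
        also have "\<dots> = ennreal (\<Sum>j\<le>m. \<Sum>i<2^j. Gam^3 * c j * \<Delta> j i \<omega>)"
          using t2 by (intro sum_ennreal)
        finally show ?thesis using t0 t2 by (simp add: ennreal_plus sum_nonneg)
      qed
      finally show ?thesis by simp
    qed
    have "(\<integral>\<^sup>+\<omega>. ennreal ((Bm m \<omega>)^4) \<partial>M) \<le>
        (\<integral>\<^sup>+\<omega>. ennreal (Gam^3 * (F \<omega> 0)^4) + (\<Sum>j\<le>m. \<Sum>i<2^j. ennreal (Gam^3 * c j * \<Delta> j i \<omega>)) \<partial>M)"
      by (rule nn_integral_mono) (rule pw2)
    also have "\<dots> = (\<integral>\<^sup>+\<omega>. ennreal (Gam^3 * (F \<omega> 0)^4) \<partial>M) +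
        (\<Sum>j\<le>m. \<Sum>i<2^j. \<integral>\<^sup>+\<omega>. ennreal (Gam^3 * c j * \<Delta> j i \<omega>) \<partial>M)"
      using \<Delta>m meas by (simp add: nn_integral_add nn_integral_sum)
    also have "\<dots> = ennreal (Gam^3) * (\<integral>\<^sup>+\<omega>. ennreal ((F \<omega> 0)^4) \<partial>M) +
        (\<Sum>j\<le>m. \<Sum>i<2^j. ennreal (Gam^3 * c j) * \<integral>\<^sup>+\<omega>. ennreal (\<Delta> j i \<omega>) \<partial>M)"
      using \<Delta>m meas Gam_pos cnn
      by (simp add: nn_integral_ennreal_cmult mult.assoc[symmetric])
    also have "\<dots> \<le> ennreal (Gam^3) * ennreal a + (\<Sum>j\<le>m. \<Sum>i<(2::nat)^j. ennreal (Gam^3 * c j) * ennreal (h j))"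
    proof -
      have b1: "ennreal (Gam^3) * (\<integral>\<^sup>+\<omega>. ennreal ((F \<omega> 0)^4) \<partial>M) \<le> ennreal (Gam^3) * ennreal a"
        by (rule mult_left_mono[OF m0]) simp
      have b2: "(\<integral>\<^sup>+\<omega>. ennreal (\<Delta> j i \<omega>) \<partial>M) \<le> ennreal (h j)" if i: "i < 2^j" for j i
      proof -
        have ii: "real i < 2^j" "real (Suc i) \<le> 2^j"
          using i by (metis of_nat_less_numeral_power_cancel_iff,
                      metis Suc_leI of_nat_le_numeral_power_cancel_iff)
        have x1: "L * real (Suc i) / 2^j \<in> {0..L}"
        proof -
          have "L * real (Suc i) \<le> L * 2^j" using ii L by (intro mult_left_mono) auto
          then show ?thesis using L by (auto simp: pos_divide_le_eq simp del: of_nat_Suc)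
        qed
        have x2: "L * real i / 2^j \<in> {0..L}"
        proof -
          have "L * real i \<le> L * 2^j" using ii L by (intro mult_left_mono) auto
          then show ?thesis using L by (auto simp: pos_divide_le_eq)
        qed
        have "L * real (Suc i) / 2^j - L * real i / 2^j = L / 2^j"
          by (simp add: diff_divide_distrib[symmetric] algebra_simps)
        then have "\<bar>L * real (Suc i) / 2^j - L * real i / 2^j\<bar> = L / 2^j"
          using L by simp
        then show ?thesis
          using md[OF x1 x2] unfolding \<Delta>_def h_def by simp
      qed
      have "(\<Sum>j\<le>m. \<Sum>i<2^j. ennreal (Gam^3 * c j) * \<integral>\<^sup>+\<omega>. ennreal (\<Delta> j i \<omega>) \<partial>M)
            \<le> (\<Sum>j\<le>m. \<Sum>i<(2::nat)^j. ennreal (Gam^3 * c j) * ennreal (h j))"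
        by (intro sum_mono mult_left_mono b2) auto
      then show ?thesis by (intro add_mono b1)
    qed
    also have "\<dots> = ennreal (Gam^3 * a + (\<Sum>j\<le>m. 2^j * (Gam^3 * c j * h j)))"
    proof -
      have k: "0 \<le> Gam^3 * c j * h j" for j using Gam_pos cnn hnn by simp
      have "ennreal (Gam^3) * ennreal a = ennreal (Gam^3 * a)"
        using Gam_pos by (simp add: ennreal_mult')
      moreover have "(\<Sum>i<(2::nat)^j. ennreal (Gam^3 * c j) * ennreal (h j)) = ennreal (2^j * (Gam^3 * c j * h j))" for j
      proof -
        have "(\<Sum>i<(2::nat)^j. ennreal (Gam^3 * c j) * ennreal (h j)) = (\<Sum>i<(2::nat)^j. ennreal (Gam^3 * c j * h j))"
          using Gam_pos cnn by (simp add: ennreal_mult')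
        also have "\<dots> = ennreal (\<Sum>i<(2::nat)^j. Gam^3 * c j * h j)"
          using k by (intro sum_ennreal)
        also have "(\<Sum>i<(2::nat)^j. Gam^3 * c j * h j) = 2^j * (Gam^3 * c j * h j)" by simp
        finally show ?thesis .
      qed
      moreover have "(\<Sum>j\<le>m. ennreal (2^j * (Gam^3 * c j * h j))) = ennreal (\<Sum>j\<le>m. 2^j * (Gam^3 * c j * h j))"
        using k by (intro sum_ennreal) simp
      moreover have "0 \<le> Gam^3 * a" using Gam_pos a by simp
      moreover have "0 \<le> (\<Sum>j\<le>m. 2^j * (Gam^3 * c j * h j))" using k by (intro sum_nonneg) simp
      ultimately show ?thesis by (simp add: ennreal_plus)
    qed
    also have "\<dots> \<le> ennreal (chain_const L * (a + b))"
    proof (rule ennreal_leI)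
      have "(\<Sum>j\<le>m. 2^j * (Gam^3 * c j * h j)) = Gam^3 * (b * L powr (5/4) / rho^3) * (\<Sum>j\<le>m. rho^j)"
      proof -
        have "2^j * (Gam^3 * c j * h j) = Gam^3 * (b * L powr (5/4) / rho^3) * rho^j" for j
        proof -
          have "2^j * (Gam^3 * c j * h j) = Gam^3 * b * c j * (2^j * (L / 2^j) powr (5/4))"
            unfolding h_def by (simp add: ac_simps)
          also have "\<dots> = Gam^3 * b * c j * (L powr (5/4) * rho^(4*j))" by (simp add: dyadic_identity[OF L])
          also have "\<dots> = Gam^3 * (b * L powr (5/4) / rho^3) * rho^j"
          proof -
            have "c j * rho^(4*j) = rho^j / rho^3"
            proof -
              have q1: "rho^(4*j) = rho^j * rho^(3*j)" by (simp add: power_add[symmetric])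
              have q2: "(rho^(Suc j))^3 = rho^3 * rho^(3*j)" unfolding power_mult[symmetric] power_add[symmetric] by (simp add: algebra_simps)
              have q3: "rho^(3*j) \<noteq> 0" "rho^3 \<noteq> 0" using rho_pos by auto
              show ?thesis unfolding c_def q1 q2 by (rule aux_cancel[OF q3])
            qed
            have "Gam^3 * b * c j * (L powr (5/4) * rho^(4*j)) = Gam^3 * b * L powr (5/4) * (c j * rho^(4*j))"
              by (simp only: mult_ac)
            also have "\<dots> = Gam^3 * b * L powr (5/4) * (rho^j / rho^3)" by (simp only: \<open>c j * rho^(4*j) = rho^j / rho^3\<close>)
            also have "\<dots> = Gam^3 * (b * L powr (5/4) / rho^3) * rho^j" by (simp add: mult_ac)
            finally show ?thesis .
          qed
          finally show ?thesis .
        qed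
        then show ?thesis by (simp add: sum_distrib_left)
      qed
      also have "\<dots> \<le> Gam^3 * (b * L powr (5/4) / rho^3) * Gam"
        using Gam_pos rho_pos b by (intro mult_left_mono sum_rho_le) auto
      finally have "Gam^3 * a + (\<Sum>j\<le>m. 2^j * (Gam^3 * c j * h j)) \<le> Gam^3 * a + Gam^3 * (b * L powr (5/4) / rho^3) * Gam"
        by simp
      also have "\<dots> \<le> chain_const L * (a + b)"
      proof -
        have "chain_const L * (a + b) = Gam^3 * a + Gam^3 * b + Gam^3 * (L powr (5/4) * Gam / rho^3) * a + Gam^3 * (L powr (5/4) * Gam / rho^3) * b"
          unfolding chain_const_def by (simp add: algebra_simps add_divide_distrib)
        moreover have "Gam^3 * (b * L powr (5/4) / rho^3) * Gam = Gam^3 * (L powr (5/4) * Gam / rho^3) * b"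
          by (simp add: ac_simps)
        moreover have "0 \<le> Gam^3 * b" using Gam_pos b by simp
        moreover have "0 \<le> Gam^3 * (L powr (5/4) * Gam / rho^3) * a" using Gam_pos rho_pos a by simp
        ultimately show ?thesis by linarith
      qed
      finally show "Gam^3 * a + (\<Sum>j\<le>m. 2^j * (Gam^3 * c j * h j)) \<le> chain_const L * (a + b)" .
    qed
    finally show ?thesis .
  qed
  have "(SUP m. \<integral>\<^sup>+\<omega>. ennreal ((Bm m \<omega>)^4) \<partial>M) \<le> ennreal (chain_const L * (a + b))"
    by (rule SUP_least) (rule step3)
  with step1 step2 show ?thesis by simp
qed

lemma rvar_le_t:
  assumes t: "0 < t" "t \<le> 1" and n: "n > 0"
  shows "rvar \<mu> t n \<le> t * exp (2 * max \<mu> 0)"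
proof -
  have term_le: "(exp (\<mu> * (t - t*real i/real n)))\<^sup>2 \<le> exp (2 * max \<mu> 0)" if i: "i < n" for i
  proof -
    have s0: "0 \<le> t - t*real i/real n" using i t n by (simp add: field_simps)
    have "t*real i/real n \<ge> 0" using t by simp
    then have s1: "t - t*real i/real n \<le> 1" using t by linarith
    have "(exp (\<mu> * (t - t*real i/real n)))\<^sup>2 = exp (2 * (\<mu> * (t - t*real i/real n)))"
      by (simp add: power2_eq_square exp_add[symmetric])
    also have "\<dots> \<le> exp (2 * max \<mu> 0)"
    proof -
      have "\<mu> * (t - t*real i/real n) \<le> max \<mu> 0 * (t - t*real i/real n)"
        using s0 by (intro mult_right_mono) auto
      also have "\<dots> \<le> max \<mu> 0 * 1" using s1 by (intro mult_left_mono) auto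
      finally show ?thesis by simp
    qed
    finally show ?thesis .
  qed
  have "rvar \<mu> t n \<le> (\<Sum>i<n. exp (2 * max \<mu> 0) * (t / real n))"
    unfolding rvar_def using t by (intro sum_mono mult_right_mono term_le) auto
  also have "\<dots> = t * exp (2 * max \<mu> 0)" using n by simp
  finally show ?thesis .
qed

lemma aux_geo: "E > 1 \<Longrightarrow> (1 / E) / (1 - 1 / E) = 1 / (E - (1::real))"
  by (simp add: field_simps)

lemma aux_inv: "c > 0 \<Longrightarrow> m > 0 \<Longrightarrow> 1 / (2 * m * c) * c = 1 / (2 * (m::real))"
  by (simp add: field_simps)

lemma rvar_le_inv:
  assumes t: "0 < t" and n: "n > 0" and mu: "\<mu> < 0"
  shows "rvar \<mu> t n \<le> 1 / (2 * (- \<mu>))"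
proof -
  define r where "r = exp (2 * \<mu> * (t / real n))"
  have tn: "t / real n > 0" using t n by simp
  have "2 * \<mu> * (t / real n) < 0" using mult_neg_pos[of "2 * \<mu>" "t / real n"] mu tn by simp
  then have r0: "0 < r" and r1: "r < 1" by (auto simp: r_def)
  have tt: "(exp (\<mu> * (t - t*real i/real n)))\<^sup>2 = r ^ (n - i)" if i: "i < n" for i
  proof -
    have rn: "real (n - i) = real n - real i" using i by (simp add: of_nat_diff)
    have nt: "real n * (t / real n) = t" using n by simp
    have "real (n - i) * (t / real n) = t - t*real i/real n"
      unfolding rn left_diff_distrib nt by simp
    then have e: "2 * (\<mu> * (t - t*real i/real n)) = real (n - i) * (2 * \<mu> * (t / real n))"
      by (metis mult.assoc mult.commute mult.left_commute)
    have sq: "(exp y)\<^sup>2 = exp (2 * y)" for y :: real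
      by (metis exp_add mult_2 power2_eq_square)
    have "(exp (\<mu> * (t - t*real i/real n)))\<^sup>2 = exp (2 * (\<mu> * (t - t*real i/real n)))"
      by (rule sq)
    also have "\<dots> = exp (real (n - i) * (2 * \<mu> * (t / real n)))" by (simp only: e)
    also have "\<dots> = r ^ (n - i)" unfolding r_def by (rule exp_of_nat_mult)
    finally show ?thesis .
  qed
  have Seq: "rvar \<mu> t n = (\<Sum>i<n. r ^ (n - i)) * (t / real n)"
    unfolding rvar_def sum_distrib_right by (intro sum.cong refl) (simp add: tt)
  have "(\<Sum>i<n. r ^ (n - i)) = (\<Sum>i<n. r ^ Suc i)"
  proof -
    have "(\<Sum>i<n. r ^ (n - i)) = (\<Sum>i<n. r ^ Suc (n - Suc i))"
      by (intro sum.cong refl) (simp add: Suc_diff_Suc)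
    also have "\<dots> = (\<Sum>i<n. r ^ Suc i)" by (rule sum.nat_diff_reindex)
    finally show ?thesis .
  qed
  also have "(\<Sum>i<n. r ^ Suc i) = r * ((1 - r^n) / (1 - r))"
  proof -
    have "(\<Sum>i<n. r ^ Suc i) = r * (\<Sum>i<n. r^i)" by (simp add: sum_distrib_left)
    also have "(\<Sum>i<n. r^i) = (1 - r^n) / (1 - r)" using r1 by (subst sum_gp_strict) auto
    finally show ?thesis .
  qed
  also have "\<dots> \<le> r / (1 - r)"
  proof -
    have "(1 - r^n) / (1 - r) \<le> 1 / (1 - r)" using r0 r1 by (intro divide_right_mono) auto
    then show ?thesis using r0 by (metis mult.right_neutral mult_left_mono less_imp_le times_divide_eq_right)
  qed
  finally have "(\<Sum>i<n. r ^ (n - i)) \<le> r / (1 - r)" .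
  then have A: "rvar \<mu> t n \<le> r / (1 - r) * (t / real n)"
    unfolding Seq using t n by (intro mult_right_mono) auto
  define x where "x = 2 * (- \<mu>) * (t / real n)"
  have x0: "x > 0" unfolding x_def using mult_pos_pos[of "2 * (- \<mu>)" "t / real n"] mu tn by linarith
  have rx: "r = exp (- x)" by (simp add: r_def x_def)
  have "r / (1 - r) = 1 / (exp x - 1)"
  proof -
    have "exp x * exp (- x) = 1" by (simp add: exp_minus)
    moreover have "exp x - 1 > 0" using x0 by simp
    ultimately show ?thesis unfolding rx exp_minus inverse_eq_divide
      by (intro aux_geo) auto
  qed
  also have "\<dots> \<le> 1 / x"
  proof -
    have "x \<le> exp x - 1" using exp_ge_add_one_self[of x] by linarith
    then show ?thesis using x0 by (intro divide_left_mono) auto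
  qed
  finally have "r / (1 - r) * (t / real n) \<le> 1 / x * (t / real n)"
    using t n by (intro mult_right_mono) auto
  also have "1 / x * (t / real n) = 1 / (2 * (- \<mu>))" unfolding x_def using tn mu by (intro aux_inv) auto
  finally show ?thesis using A by simp
qed


lemma min_powr:
  fixes a b v \<theta> :: real
  assumes a: "a > 0" and b: "b > 0" and va: "v \<le> a" and vb: "v \<le> b" and th: "0 \<le> \<theta>" "\<theta> \<le> 1"
  shows "v \<le> a powr \<theta> * b powr (1 - \<theta>)"
proof (cases "a \<le> b")
  case True
  have "a = a powr \<theta> * a powr (1 - \<theta>)" using a by (simp add: powr_add[symmetric])
  also have "\<dots> \<le> a powr \<theta> * b powr (1 - \<theta>)"
    using True a th by (intro mult_left_mono powr_mono2) auto
  finally show ?thesis using va by linarith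
next
  case False
  have "b = b powr \<theta> * b powr (1 - \<theta>)" using b by (simp add: powr_add[symmetric])
  also have "\<dots> \<le> a powr \<theta> * b powr (1 - \<theta>)"
    using False b th by (intro mult_right_mono powr_mono2) auto
  finally show ?thesis using vb by linarith
qed

definition C0 :: "real \<Rightarrow> real" where "C0 \<nu> = 1 + exp (4 * \<nu>\<^sup>2) * (1 + 2 * \<bar>\<nu>\<bar>)^4"

lemma C0_ge1: "C0 \<nu> \<ge> 1" unfolding C0_def by simp

lemma rvar_eig:
  assumes q: "q > 0" and t: "0 < t" "t \<le> 1" and n: "n > 0"
  shows "rvar (- (q^4) - \<nu> * q^2) t n \<le> C0 \<nu> * t powr (1/16) * q powr (-15/4)"
proof -
  define \<mu> where "\<mu> = - (q^4) - \<nu> * q^2"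
  have q2: "q^2 > 0" "q^4 > 0" using q by auto
  have nq: "- \<nu> * q^2 \<le> \<bar>\<nu>\<bar> * q^2" using q2 by (intro mult_right_mono) auto
  have R: "0 \<le> t powr (1/16) * q powr (-15/4)" by simp
  show ?thesis
  proof (cases "q^2 \<ge> 2 * \<bar>\<nu>\<bar>")
    case True
    have "\<bar>\<nu>\<bar> * q^2 \<le> (q^2 / 2) * q^2" using True q2 by (intro mult_right_mono) auto
    also have "\<dots> = q^4 / 2" by (simp add: power2_eq_square power4_eq_xxxx)
    finally have mu_le: "\<mu> \<le> - (q^4 / 2)" unfolding \<mu>_def using nq by linarith
    then have mu_neg: "\<mu> < 0" using q2 by linarith
    have v1: "rvar \<mu> t n \<le> t"
      using rvar_le_t[OF t n, of \<mu>] mu_neg by (simp add: max_def)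
    have "rvar \<mu> t n \<le> 1 / (2 * (- \<mu>))" by (rule rvar_le_inv[OF t(1) n mu_neg])
    also have "\<dots> \<le> 1 / q^4"
    proof (rule divide_left_mono)
      show "q^4 \<le> 2 * (- \<mu>)" using mu_le by linarith
      show "0 < 2 * (- \<mu>) * q^4" using mu_neg q2 by (intro mult_pos_pos) auto
    qed simp
    finally have v2: "rvar \<mu> t n \<le> 1 / q^4" .
    have "rvar \<mu> t n \<le> t powr (1/16) * (1 / q^4) powr (1 - 1/16)"
      by (rule min_powr[OF t(1) _ v1 v2]) (use q2 in auto)
    also have "(1 / q^4) powr (1 - 1/16) = q powr (-15/4)"
    proof -
      have "q powr (-4) = 1 / q^4" using q by (simp add: powr_minus_divide)
      then have "(1 / q^4) = q powr (-4)" by simp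
      then show ?thesis using q by (simp add: powr_powr)
    qed
    also have "t powr (1/16) * q powr (-15/4) \<le> C0 \<nu> * t powr (1/16) * q powr (-15/4)"
      using mult_right_mono[OF C0_ge1[of \<nu>] R] by (simp add: mult.assoc)
    finally show ?thesis unfolding \<mu>_def .
  next
    case False
    have "\<mu> \<le> \<bar>\<nu>\<bar> * q^2" unfolding \<mu>_def using nq q2 by linarith
    also have "\<dots> \<le> \<bar>\<nu>\<bar> * (2 * \<bar>\<nu>\<bar>)" using False by (intro mult_left_mono) auto
    also have "\<dots> = 2 * \<nu>\<^sup>2" by (simp add: power2_eq_square)
    finally have mu_le: "\<mu> \<le> 2 * \<nu>\<^sup>2" .
    have "rvar \<mu> t n \<le> t * exp (2 * max \<mu> 0)" by (rule rvar_le_t[OF t n])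
    also have "\<dots> \<le> t * exp (4 * \<nu>\<^sup>2)"
      using mu_le t by (intro mult_left_mono) (auto simp: max_def)
    also have "\<dots> \<le> t powr (1/16) * exp (4 * \<nu>\<^sup>2)"
    proof -
      have "t powr 1 \<le> t powr (1/16)" by (rule powr_mono') (use t in auto)
      then show ?thesis using t by (intro mult_right_mono) auto
    qed
    also have "\<dots> \<le> t powr (1/16) * exp (4 * \<nu>\<^sup>2) * ((1 + 2 * \<bar>\<nu>\<bar>)^4 * q powr (-15/4))"
    proof -
      define P where "P = 1 + 2 * \<bar>\<nu>\<bar>"
      have P1: "P \<ge> 1" unfolding P_def by simp
      have qP: "q \<le> P"
      proof (cases "q \<le> 1")
        case True then show ?thesis using P1 by linarith
      next
        case False
        then have "q \<le> q^2" by (simp add: power2_eq_square)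
        then show ?thesis using False \<open>\<not> q^2 \<ge> 2 * \<bar>\<nu>\<bar>\<close> unfolding P_def by linarith
      qed
      have "q powr (15/4) \<le> P powr (15/4)" using q qP by (intro powr_mono2) auto
      also have "\<dots> \<le> P powr 4" using P1 by (intro powr_mono) auto
      also have "\<dots> = P^4" using P1 by simp
      finally have "q powr (15/4) \<le> P^4" .
      moreover have "q powr (15/4) > 0" using q by simp
      ultimately have "1 \<le> P^4 * q powr (-15/4)"
        by (simp add: powr_minus_divide divide_simps)
      then show ?thesis unfolding P_def
        by (metis mult.right_neutral mult_left_mono powr_ge_zero exp_ge_zero zero_le_mult_iff)
    qed
    also have "\<dots> \<le> C0 \<nu> * t powr (1/16) * q powr (-15/4)"
    proof -
      have "t powr (1/16) * exp (4 * \<nu>\<^sup>2) * ((1 + 2 * \<bar>\<nu>\<bar>)^4 * q powr (-15/4))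
            = (exp (4 * \<nu>\<^sup>2) * (1 + 2 * \<bar>\<nu>\<bar>)^4) * (t powr (1/16) * q powr (-15/4))"
        by (simp add: mult_ac)
      also have "\<dots> \<le> C0 \<nu> * (t powr (1/16) * q powr (-15/4))"
        unfolding C0_def using R by (intro mult_right_mono) auto
      finally show ?thesis by (simp add: mult.assoc)
    qed
    finally show ?thesis unfolding \<mu>_def .
  qed
qed

definition dmode :: "real \<Rightarrow> boundary_cond \<Rightarrow> nat \<Rightarrow> real \<Rightarrow> real" where
  "dmode L bc k x = (case bc of
      Periodic \<Rightarrow> (if odd k then - (sqrt (2 / L) * fourier_freq L bc k * sin (fourier_freq L bc k * x))
                   else sqrt (2 / L) * fourier_freq L bc k * cos (fourier_freq L bc k * x))
    | Neumann \<Rightarrow> - (sqrt (2 / L) * fourier_freq L bc k * sin (fourier_freq L bc k * x)))"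

lemma mode_deriv: "((\<lambda>y. fourier_mode L bc k y) has_real_derivative dmode L bc k x) (at x)"
  by (cases bc) (auto simp: fourier_mode_def dmode_def intro!: derivative_eq_intros)

lemma dmode_cont: "continuous_on S (dmode L bc k)"
  by (cases bc; cases "odd k") (auto simp: dmode_def intro!: continuous_intros)

lemma freq_ge:
  assumes L: "L > 0" and k: "k \<ge> 1"
  shows "fourier_freq L bc k \<ge> pi * real k / L"
proof (cases bc)
  case Periodic
  have "real k \<le> 2 * real ((k + 1) div 2)" by linarith
  then have "pi * real k \<le> pi * (2 * real ((k + 1) div 2))" by (intro mult_left_mono) auto
  then show ?thesis using Periodic L by (simp add: fourier_freq_def divide_right_mono mult.assoc)
next
  case Neumann then show ?thesis by (simp add: fourier_freq_def)
qed

lemma freq_pos: "L > 0 \<Longrightarrow> k \<ge> 1 \<Longrightarrow> fourier_freq L bc k > 0"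
proof -
  assume L: "L > 0" and k: "k \<ge> 1"
  have "pi * real k / L > 0" using L k by simp
  then show ?thesis using freq_ge[OF L k, of bc] by linarith
qed

lemma dmode_bound:
  assumes L: "L > 0" and k: "k \<ge> 1"
  shows "\<bar>dmode L bc k x\<bar> \<le> sqrt (2 / L) * fourier_freq L bc k"
proof -
  define q where "q = fourier_freq L bc k"
  have q: "q > 0" using freq_pos[OF L k] by (simp add: q_def)
  have s: "sqrt (2 / L) * q \<ge> 0" using q L by simp
  have "\<bar>sqrt (2 / L) * q * sin (q * x)\<bar> \<le> sqrt (2 / L) * q" "\<bar>sqrt (2 / L) * q * cos (q * x)\<bar> \<le> sqrt (2 / L) * q"
    using s q L by (auto simp: abs_mult intro!: mult_left_le)
  then show ?thesis unfolding dmode_def q_def[symmetric] by (cases bc) auto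
qed

lemma dmode_diff:
  assumes L: "L > 0" and k: "k \<ge> 1"
  shows "\<bar>dmode L bc k x - dmode L bc k y\<bar> \<le> sqrt (2 / L) * fourier_freq L bc k * min (fourier_freq L bc k * \<bar>x - y\<bar>) 2"
proof -
  define q where "q = fourier_freq L bc k"
  have q: "q > 0" using freq_pos[OF L k] by (simp add: q_def)
  have s: "sqrt (2 / L) * q \<ge> 0" using q L by simp
  have ms: "\<bar>sin (q * x) - sin (q * y)\<bar> \<le> min (q * \<bar>x - y\<bar>) 2"
  proof -
    have "\<bar>sin (q * x) - sin (q * y)\<bar> \<le> \<bar>q * x - q * y\<bar>" by (rule sin_lip)
    also have "\<dots> = q * \<bar>x - y\<bar>" using q by (simp add: abs_mult right_diff_distrib[symmetric])
    finally have "\<bar>sin (q * x) - sin (q * y)\<bar> \<le> q * \<bar>x - y\<bar>" .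
    moreover have "\<bar>sin (q * x) - sin (q * y)\<bar> \<le> 2"
      using abs_sin_le_one[of "q*x"] abs_sin_le_one[of "q*y"] by linarith
    ultimately show ?thesis by simp
  qed
  have mc: "\<bar>cos (q * x) - cos (q * y)\<bar> \<le> min (q * \<bar>x - y\<bar>) 2"
  proof -
    have "\<bar>cos (q * x) - cos (q * y)\<bar> \<le> \<bar>q * x - q * y\<bar>" by (rule cos_lip)
    also have "\<dots> = q * \<bar>x - y\<bar>" using q by (simp add: abs_mult right_diff_distrib[symmetric])
    finally have "\<bar>cos (q * x) - cos (q * y)\<bar> \<le> q * \<bar>x - y\<bar>" .
    moreover have "\<bar>cos (q * x) - cos (q * y)\<bar> \<le> 2"
      using abs_cos_le_one[of "q*x"] abs_cos_le_one[of "q*y"] by linarith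
    ultimately show ?thesis by simp
  qed
  have e1: "\<bar>- (sqrt (2 / L) * q * sin (q * x)) - - (sqrt (2 / L) * q * sin (q * y))\<bar>
      = sqrt (2 / L) * q * \<bar>sin (q * x) - sin (q * y)\<bar>"
    using s q L by (simp add: abs_mult right_diff_distrib[symmetric] abs_minus_commute)
  have e2: "\<bar>sqrt (2 / L) * q * cos (q * x) - sqrt (2 / L) * q * cos (q * y)\<bar>
      = sqrt (2 / L) * q * \<bar>cos (q * x) - cos (q * y)\<bar>"
    using s q L by (simp add: abs_mult right_diff_distrib[symmetric])
  have b1: "\<bar>- (sqrt (2 / L) * q * sin (q * x)) - - (sqrt (2 / L) * q * sin (q * y))\<bar> \<le> sqrt (2 / L) * q * min (q * \<bar>x - y\<bar>) 2"
    unfolding e1 using ms s by (rule mult_left_mono)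
  have b2: "\<bar>sqrt (2 / L) * q * cos (q * x) - sqrt (2 / L) * q * cos (q * y)\<bar> \<le> sqrt (2 / L) * q * min (q * \<bar>x - y\<bar>) 2"
    unfolding e2 using mc s by (rule mult_left_mono)
  show ?thesis using b1 b2 unfolding dmode_def q_def[symmetric] by (cases bc) auto
qed

lemma min_sq_powr:
  fixes u :: real assumes u: "u \<ge> 0"
  shows "(min u 2)\<^sup>2 \<le> 4 * u powr (5/8)"
proof (cases "u \<le> 2")
  case True
  then have m: "min u 2 = u" by simp
  show ?thesis
  proof (cases "u = 0")
    case True then show ?thesis by simp
  next
    case False
    then have up: "u > 0" using u by simp
    have "u\<^sup>2 = u powr (5/8) * u powr (11/8)" using up by (simp add: powr_add[symmetric])
    also have "u powr (11/8) \<le> 2 powr (11/8)" using up True by (intro powr_mono2) auto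
    also have "2 powr (11/8) \<le> (2::real) powr 2" by (intro powr_mono) auto
    also have "(2::real) powr 2 = 4" by simp
    finally have "u\<^sup>2 \<le> u powr (5/8) * 4" by (simp add: mult_left_mono)
    then show ?thesis using m by (simp add: mult.commute)
  qed
next
  case False
  then have m: "min u 2 = 2" by simp
  have "1 \<le> u powr (5/8)" using False by (intro ge_one_powr_ge_zero) auto
  then show ?thesis using m by simp
qed

lemma dmode_diff_sq:
  assumes L: "L > 0" and k: "k \<ge> 1"
  shows "(dmode L bc k x - dmode L bc k y)\<^sup>2 \<le> (2 / L) * (fourier_freq L bc k)\<^sup>2 * (4 * (fourier_freq L bc k * \<bar>x - y\<bar>) powr (5/8))"
proof -
  define q where "q = fourier_freq L bc k"
  have q: "q > 0" using freq_pos[OF L k] by (simp add: q_def)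
  have "(dmode L bc k x - dmode L bc k y)\<^sup>2 = \<bar>dmode L bc k x - dmode L bc k y\<bar>\<^sup>2" by simp
  also have "\<dots> \<le> (sqrt (2 / L) * q * min (q * \<bar>x - y\<bar>) 2)\<^sup>2"
    using dmode_diff[OF L k, of bc x y] by (intro power_mono) (auto simp: q_def)
  also have "\<dots> = (2 / L) * q\<^sup>2 * (min (q * \<bar>x - y\<bar>) 2)\<^sup>2"
    using L by (simp add: power_mult_distrib)
  also have "\<dots> \<le> (2 / L) * q\<^sup>2 * (4 * (q * \<bar>x - y\<bar>) powr (5/8))"
    using L q by (intro mult_left_mono min_sq_powr) auto
  finally show ?thesis by (simp add: q_def)
qed

lemma deriv_stoch:
  "deriv (\<lambda>y. stoch_conv L \<nu> bc \<alpha> w N t y \<omega>) x =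
     (\<Sum>k=1..N. \<alpha> k * dmode L bc k x * wiener_int (\<lambda>s. exp (A_eigenvalue L \<nu> bc k * (t - s))) (w k) t \<omega>)"
  unfolding stoch_conv_def
  by (intro DERIV_imp_deriv DERIV_sum DERIV_cmult_right DERIV_cmult mode_deriv)

lemma sum_freq_powr:
  assumes L: "L > 0" and s: "s > 1"
  shows "(\<Sum>k=1..N. fourier_freq L bc k powr (-s)) \<le> (pi / L) powr (-s) * suminf (\<lambda>k. real k powr (-s))"
proof -
  have summ: "summable (\<lambda>k. real k powr (-s))" using s by (simp add: summable_real_powr_iff)
  have "(\<Sum>k=1..N. fourier_freq L bc k powr (-s)) \<le> (\<Sum>k=1..N. (pi / L) powr (-s) * real k powr (-s))"
  proof (rule sum_mono)
    fix k assume k: "k \<in> {1..N}"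
    then have k1: "k \<ge> 1" by simp
    have pos: "pi * real k / L > 0" using L k1 by simp
    have "fourier_freq L bc k powr (-s) \<le> (pi * real k / L) powr (-s)"
      using s pos freq_ge[OF L k1, of bc] by (auto intro!: powr_mono2')
    also have "pi * real k / L = (pi / L) * real k" by simp
    also have "((pi / L) * real k) powr (-s) = (pi / L) powr (-s) * real k powr (-s)"
      by (rule powr_mult)
    finally show "fourier_freq L bc k powr (-s) \<le> (pi / L) powr (-s) * real k powr (-s)" .
  qed
  also have "\<dots> = (pi / L) powr (-s) * (\<Sum>k=1..N. real k powr (-s))" by (simp add: sum_distrib_left)
  also have "(\<Sum>k=1..N. real k powr (-s)) \<le> suminf (\<lambda>k. real k powr (-s))"
    by (rule sum_le_suminf[OF summ]) auto
  then have "(pi / L) powr (-s) * (\<Sum>k=1..N. real k powr (-s)) \<le> (pi / L) powr (-s) * suminf (\<lambda>k. real k powr (-s))"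
    by (intro mult_left_mono) auto
  finally show ?thesis .
qed

lemma coeff_sum_bound:
  assumes L: "L > 0" and \<alpha>: "\<forall>k\<ge>1. 0 < \<alpha> k \<and> \<alpha> k \<le> K" and t: "t > 0" and G: "G \<ge> 0"
    and d: "\<And>k. k \<ge> 1 \<Longrightarrow> (d k)\<^sup>2 \<le> G * (fourier_freq L bc k)\<^sup>2 * fourier_freq L bc k powr e"
    and s: "s = 15/4 - 2 - e" "s > 1"
  shows "(\<Sum>k=1..N. (\<alpha> k * d k)\<^sup>2 * (C0 \<nu> * t powr (1/16) * fourier_freq L bc k powr (-15/4)))
          \<le> K\<^sup>2 * G * C0 \<nu> * t powr (1/16) * ((pi / L) powr (-s) * suminf (\<lambda>k. real k powr (-s)))"
proof -
  have C0p: "C0 \<nu> \<ge> 0" using C0_ge1[of \<nu>] by simp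
  have "(\<Sum>k=1..N. (\<alpha> k * d k)\<^sup>2 * (C0 \<nu> * t powr (1/16) * fourier_freq L bc k powr (-15/4)))
      \<le> (\<Sum>k=1..N. (K\<^sup>2 * G * C0 \<nu> * t powr (1/16)) * fourier_freq L bc k powr (-s))"
  proof (rule sum_mono)
    fix k assume k: "k \<in> {1..N}"
    then have k1: "k \<ge> 1" by simp
    define q where "q = fourier_freq L bc k"
    have q: "q > 0" using freq_pos[OF L k1] by (simp add: q_def)
    have a2: "(\<alpha> k)\<^sup>2 \<le> K\<^sup>2" using \<alpha> k1 by (intro power_mono) auto
    have V: "0 \<le> C0 \<nu> * t powr (1/16) * q powr (-15/4)" using C0p by simp
    have "(\<alpha> k * d k)\<^sup>2 * (C0 \<nu> * t powr (1/16) * q powr (-15/4)) = (\<alpha> k)\<^sup>2 * (d k)\<^sup>2 * (C0 \<nu> * t powr (1/16) * q powr (-15/4))"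
      by (simp add: power_mult_distrib)
    also have "\<dots> \<le> K\<^sup>2 * (G * q\<^sup>2 * q powr e) * (C0 \<nu> * t powr (1/16) * q powr (-15/4))"
      using a2 d[OF k1] V G by (intro mult_right_mono mult_mono) (auto simp: q_def)
    also have "\<dots> = (K\<^sup>2 * G * C0 \<nu> * t powr (1/16)) * (q\<^sup>2 * q powr e * q powr (-15/4))"
      by (simp add: mult_ac)
    also have "q\<^sup>2 * q powr e * q powr (-15/4) = q powr (-s)"
    proof -
      have "q\<^sup>2 = q powr 2" using q by simp
      then have "q\<^sup>2 * q powr e * q powr (-15/4) = q powr (2 + e + (-15/4))"
        by (simp only: powr_add)
      also have "2 + e + (-15/4) = -s" using s by simp
      finally show ?thesis .
    qed
    finally show "(\<alpha> k * d k)\<^sup>2 * (C0 \<nu> * t powr (1/16) * fourier_freq L bc k powr (-15/4))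
        \<le> (K\<^sup>2 * G * C0 \<nu> * t powr (1/16)) * fourier_freq L bc k powr (-s)" by (simp add: q_def)
  qed
  also have "\<dots> = (K\<^sup>2 * G * C0 \<nu> * t powr (1/16)) * (\<Sum>k=1..N. fourier_freq L bc k powr (-s))"
    by (simp add: sum_distrib_left)
  also have "\<dots> \<le> (K\<^sup>2 * G * C0 \<nu> * t powr (1/16)) * ((pi / L) powr (-s) * suminf (\<lambda>k. real k powr (-s)))"
    using G C0p by (intro mult_left_mono sum_freq_powr[OF L s(2)]) auto
  finally show ?thesis .
qed

theorem lemma2:
  fixes L \<nu> :: real and bc :: boundary_cond and \<alpha> :: "nat \<Rightarrow> real"
    and M :: "'a measure" and w :: "nat \<Rightarrow> real \<Rightarrow> 'a \<Rightarrow> real"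
  assumes "prob_space M"
    and "L > 0"
    and "\<forall>k\<ge>1. \<alpha> k > 0"
    and "\<exists>K. \<forall>k\<ge>1. \<alpha> k \<le> K"
    and "\<forall>k\<ge>1. std_bm M (w k)"
    and "prob_space.indep_vars M (\<lambda>_. Pi\<^sub>M UNIV (\<lambda>_. borel)) (\<lambda>k \<omega> t. w k t \<omega>) {1..}"
  shows "\<exists>C. \<forall>N t. 0 \<le> t \<and> t \<le> 1 \<longrightarrow>
           (\<integral>\<^sup>+\<omega>. ennreal ((SUP x\<in>{0..L}. \<bar>deriv (\<lambda>y. stoch_conv L \<nu> bc \<alpha> w N t y \<omega>) x\<bar>) ^ 4) \<partial>M)
             \<le> ennreal (C * t powr (1/8))"
proof -
  note Mp = assms(1) and L = assms(2) and bm = assms(5) and ind = assms(6)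
  obtain K where K: "\<forall>k\<ge>1. \<alpha> k \<le> K" using assms(4) by blast
  have \<alpha>K: "\<forall>k\<ge>1. 0 < \<alpha> k \<and> \<alpha> k \<le> K" using assms(3) K by auto
  define S1 where "S1 = (pi / L) powr (-(9/8)) * suminf (\<lambda>k. real k powr (-(9/8)))"
  define S2 where "S2 = (pi / L) powr (-(7/4)) * suminf (\<lambda>k. real k powr (-(7/4)))"
  define A1 where "A1 = K\<^sup>2 * (2 / L) * C0 \<nu> * S2"
  define B1 where "B1 = K\<^sup>2 * (8 / L) * C0 \<nu> * S1"
  define C where "C = chain_const L * (3 * A1\<^sup>2 + 3 * B1\<^sup>2)"
  show ?thesis
  proof (intro exI allI impI)
    fix N :: nat and t :: real
    assume t01: "0 \<le> t \<and> t \<le> 1"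
    show "(\<integral>\<^sup>+\<omega>. ennreal ((SUP x\<in>{0..L}. \<bar>deriv (\<lambda>y. stoch_conv L \<nu> bc \<alpha> w N t y \<omega>) x\<bar>) ^ 4) \<partial>M)
             \<le> ennreal (C * t powr (1/8))"
    proof (cases "t = 0")
      case True
      have z: "stoch_conv L \<nu> bc \<alpha> w N t y \<omega> = 0" for y \<omega>
        using True by (simp add: stoch_conv_def wiener_int_def)
      have "deriv (\<lambda>y. stoch_conv L \<nu> bc \<alpha> w N t y \<omega>) x = 0" for x \<omega>
        unfolding z by simp
      then show ?thesis using L True by simp
    next
      case False
      then have t: "t > 0" "t \<le> 1" using t01 by auto
      define \<mu> where "\<mu> k = A_eigenvalue L \<nu> bc k" for k
      define Z where "Z k \<omega> = wiener_int (\<lambda>s. exp (\<mu> k * (t - s))) (w k) t \<omega>" for k \<omega>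
      define F where "F \<omega> x = (\<Sum>k=1..N. \<alpha> k * dmode L bc k x * Z k \<omega>)" for \<omega> x
      have dF: "deriv (\<lambda>y. stoch_conv L \<nu> bc \<alpha> w N t y \<omega>) x = F \<omega> x" for \<omega> x
        unfolding F_def Z_def \<mu>_def by (rule deriv_stoch)
      have Zm: "Z k \<in> borel_measurable M" if "k \<ge> 1" for k
      proof -
        have B: "std_bm M (w k)" using bm that by auto
        then have wm: "\<And>s. w k s \<in> borel_measurable M" unfolding std_bm_def by auto
        have lim: "\<And>\<omega>. \<omega> \<in> space M \<Longrightarrow> (\<lambda>n. rsum (\<mu> k) t (w k) n \<omega>) \<longlonglongrightarrow> wiener_int (\<lambda>s. exp (\<mu> k * (t - s))) (w k) t \<omega>"
          by (rule rsum_tendsto[OF B t(1)])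
        have mm: "\<And>n. (\<lambda>\<omega>. rsum (\<mu> k) t (w k) n \<omega>) \<in> borel_measurable M"
          by (rule rsum_measurable) (rule wm)
        have "(\<lambda>\<omega>. wiener_int (\<lambda>s. exp (\<mu> k * (t - s))) (w k) t \<omega>) \<in> borel_measurable M"
          by (rule borel_measurable_LIMSEQ_real[OF lim mm])
        then show ?thesis unfolding Z_def[abs_def] by simp
      qed
      have Fm: "(\<lambda>\<omega>. F \<omega> x) \<in> borel_measurable M" for x
        unfolding F_def using Zm by (intro borel_measurable_sum borel_measurable_times) auto
      have Fc: "continuous_on {0..L} (F \<omega>)" for \<omega>
      proof -
        have "continuous_on {0..L} (\<lambda>x. \<Sum>k=1..N. \<alpha> k * dmode L bc k x * Z k \<omega>)"
          by (intro continuous_intros continuous_on_compose2[OF dmode_cont]) auto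
        then show ?thesis unfolding F_def[abs_def] by simp
      qed
      define V where "V k = C0 \<nu> * t powr (1/16) * fourier_freq L bc k powr (-15/4)" for k
      have Vb: "rvar (\<mu> k) t n \<le> V k" if "k \<in> {1..N}" "n > 0" for k n
      proof -
        have q: "fourier_freq L bc k > 0" using freq_pos[OF L] that by auto
        show ?thesis unfolding \<mu>_def A_eigenvalue_def V_def
          by (rule rvar_eig[OF q t that(2)])
      qed
      have tt: "(t powr (1/16))\<^sup>2 = t powr (1/8)"
        by (simp add: power2_eq_square powr_add[symmetric])
      have m0: "(\<integral>\<^sup>+\<omega>. ennreal ((F \<omega> 0)^4) \<partial>M) \<le> ennreal (3 * A1\<^sup>2 * t powr (1/8))"
      proof -
        define c where "c k = \<alpha> k * dmode L bc k 0" for k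
        have "(\<integral>\<^sup>+\<omega>. ennreal ((F \<omega> 0)^4) \<partial>M) \<le> ennreal (3 * (\<Sum>k\<in>{1..N}. (c k)\<^sup>2 * V k)\<^sup>2)"
          using moment_bound[OF Mp bm ind t(1), of "{1..N}" \<mu> V c] Vb
          unfolding F_def Z_def c_def by auto
        moreover have "(\<Sum>k\<in>{1..N}. (c k)\<^sup>2 * V k) \<le> A1 * t powr (1/16)"
        proof -
          have "(\<Sum>k=1..N. (\<alpha> k * dmode L bc k 0)\<^sup>2 * (C0 \<nu> * t powr (1/16) * fourier_freq L bc k powr (-15/4)))
              \<le> K\<^sup>2 * (2 / L) * C0 \<nu> * t powr (1/16) * ((pi / L) powr (-(7/4)) * suminf (\<lambda>k. real k powr (-(7/4))))"
          proof (rule coeff_sum_bound[OF L \<alpha>K t(1)])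
            fix k :: nat assume k: "k \<ge> 1"
            have q: "fourier_freq L bc k > 0" using freq_pos[OF L k] .
            have "\<bar>dmode L bc k 0\<bar> \<le> sqrt (2 / L) * fourier_freq L bc k" by (rule dmode_bound[OF L k])
            then have "\<bar>dmode L bc k 0\<bar>\<^sup>2 \<le> (sqrt (2 / L) * fourier_freq L bc k)\<^sup>2" by (intro power_mono) auto
            then show "(dmode L bc k 0)\<^sup>2 \<le> 2 / L * (fourier_freq L bc k)\<^sup>2 * fourier_freq L bc k powr 0"
              using L q by (simp add: power_mult_distrib)
          qed (use L in auto)
          then show ?thesis unfolding c_def V_def A1_def S2_def by (simp add: mult_ac)
        qed
        moreover have "0 \<le> (\<Sum>k\<in>{1..N}. (c k)\<^sup>2 * V k)"
          unfolding V_def using C0_ge1[of \<nu>] by (intro sum_nonneg mult_nonneg_nonneg) auto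
        ultimately show ?thesis
        proof -
          assume a1: "(\<integral>\<^sup>+\<omega>. ennreal ((F \<omega> 0)^4) \<partial>M) \<le> ennreal (3 * (\<Sum>k\<in>{1..N}. (c k)\<^sup>2 * V k)\<^sup>2)"
            and a2: "(\<Sum>k\<in>{1..N}. (c k)\<^sup>2 * V k) \<le> A1 * t powr (1/16)"
            and a3: "0 \<le> (\<Sum>k\<in>{1..N}. (c k)\<^sup>2 * V k)"
          have "(\<Sum>k\<in>{1..N}. (c k)\<^sup>2 * V k)\<^sup>2 \<le> (A1 * t powr (1/16))\<^sup>2" by (rule power_mono[OF a2 a3])
          also have "\<dots> = A1\<^sup>2 * t powr (1/8)" using tt by (simp add: power_mult_distrib)
          finally have "3 * (\<Sum>k\<in>{1..N}. (c k)\<^sup>2 * V k)\<^sup>2 \<le> 3 * A1\<^sup>2 * t powr (1/8)" by simp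
          then show ?thesis using a1 by (meson ennreal_leI order_trans)
        qed
      qed
      have md: "(\<integral>\<^sup>+\<omega>. ennreal ((F \<omega> x - F \<omega> y)^4) \<partial>M) \<le> ennreal ((3 * B1\<^sup>2 * t powr (1/8)) * \<bar>x - y\<bar> powr (5/4))"
        if xy: "x \<in> {0..L}" "y \<in> {0..L}" for x y
      proof -
        define h where "h = \<bar>x - y\<bar>"
        define c where "c k = \<alpha> k * (dmode L bc k x - dmode L bc k y)" for k
        have Fd: "F \<omega> x - F \<omega> y = (\<Sum>k\<in>{1..N}. c k * Z k \<omega>)" for \<omega>
          unfolding F_def c_def by (simp add: sum_subtractf[symmetric] algebra_simps)
        have "(\<integral>\<^sup>+\<omega>. ennreal ((F \<omega> x - F \<omega> y)^4) \<partial>M) \<le> ennreal (3 * (\<Sum>k\<in>{1..N}. (c k)\<^sup>2 * V k)\<^sup>2)"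
          using moment_bound[OF Mp bm ind t(1), of "{1..N}" \<mu> V c] Vb
          unfolding Fd Z_def by auto
        moreover have "(\<Sum>k\<in>{1..N}. (c k)\<^sup>2 * V k) \<le> B1 * h powr (5/8) * t powr (1/16)"
        proof -
          have "(\<Sum>k=1..N. (\<alpha> k * (dmode L bc k x - dmode L bc k y))\<^sup>2 * (C0 \<nu> * t powr (1/16) * fourier_freq L bc k powr (-15/4)))
              \<le> K\<^sup>2 * ((8 / L) * h powr (5/8)) * C0 \<nu> * t powr (1/16) * ((pi / L) powr (-(9/8)) * suminf (\<lambda>k. real k powr (-(9/8))))"
          proof (rule coeff_sum_bound[OF L \<alpha>K t(1)])
            fix k :: nat assume k: "k \<ge> 1"
            have q: "fourier_freq L bc k > 0" using freq_pos[OF L k] .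
            have "(dmode L bc k x - dmode L bc k y)\<^sup>2 \<le> (2 / L) * (fourier_freq L bc k)\<^sup>2 * (4 * (fourier_freq L bc k * \<bar>x - y\<bar>) powr (5/8))"
              by (rule dmode_diff_sq[OF L k])
            also have "\<dots> = (8 / L) * h powr (5/8) * (fourier_freq L bc k)\<^sup>2 * fourier_freq L bc k powr (5/8)"
              unfolding h_def powr_mult by (simp add: mult_ac)
            finally show "(dmode L bc k x - dmode L bc k y)\<^sup>2 \<le> (8 / L) * h powr (5/8) * (fourier_freq L bc k)\<^sup>2 * fourier_freq L bc k powr (5/8)" .
          qed (use L in auto)
          then show ?thesis unfolding c_def V_def B1_def S1_def by (simp add: mult_ac)
        qed
        moreover have "0 \<le> (\<Sum>k\<in>{1..N}. (c k)\<^sup>2 * V k)"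
          unfolding V_def using C0_ge1[of \<nu>] by (intro sum_nonneg mult_nonneg_nonneg) auto
        moreover have hh: "(h powr (5/8))\<^sup>2 = h powr (5/4)"
          by (simp add: power2_eq_square powr_add[symmetric])
        ultimately show ?thesis
        proof -
          assume a1: "(\<integral>\<^sup>+\<omega>. ennreal ((F \<omega> x - F \<omega> y)^4) \<partial>M) \<le> ennreal (3 * (\<Sum>k\<in>{1..N}. (c k)\<^sup>2 * V k)\<^sup>2)"
            and a2: "(\<Sum>k\<in>{1..N}. (c k)\<^sup>2 * V k) \<le> B1 * h powr (5/8) * t powr (1/16)"
            and a3: "0 \<le> (\<Sum>k\<in>{1..N}. (c k)\<^sup>2 * V k)"
            and a4: "(h powr (5/8))\<^sup>2 = h powr (5/4)"
          have "(\<Sum>k\<in>{1..N}. (c k)\<^sup>2 * V k)\<^sup>2 \<le> (B1 * h powr (5/8) * t powr (1/16))\<^sup>2" by (rule power_mono[OF a2 a3])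
          also have "\<dots> = B1\<^sup>2 * t powr (1/8) * h powr (5/4)" using tt a4 by (simp add: power_mult_distrib)
          finally have "3 * (\<Sum>k\<in>{1..N}. (c k)\<^sup>2 * V k)\<^sup>2 \<le> (3 * B1\<^sup>2 * t powr (1/8)) * \<bar>x - y\<bar> powr (5/4)"
            unfolding h_def by simp
          then show ?thesis using a1 by (meson ennreal_leI order_trans)
        qed
      qed
      have a0: "0 \<le> 3 * A1\<^sup>2 * t powr (1/8)" by simp
      have b0: "0 \<le> 3 * B1\<^sup>2 * t powr (1/8)" by simp
      have "(\<integral>\<^sup>+\<omega>. ennreal ((SUP x\<in>{0..L}. \<bar>F \<omega> x\<bar>)^4) \<partial>M)
            \<le> ennreal (chain_const L * (3 * A1\<^sup>2 * t powr (1/8) + 3 * B1\<^sup>2 * t powr (1/8)))"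
        by (rule chaining[OF L Fc Fm m0 md a0 b0])
      also have "chain_const L * (3 * A1\<^sup>2 * t powr (1/8) + 3 * B1\<^sup>2 * t powr (1/8)) = C * t powr (1/8)"
        unfolding C_def by (simp add: algebra_simps)
      finally show ?thesis unfolding dF .
    qed
  qed
qed

end
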